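(* Let $\mathcal C$ be a $(2,1)$-category, $\mathcal A,\mathcal B$ arrowy $2$-subcategories, $\mathcal D$ a $2$-category, and $(F_{\mathcal A},F_{\mathcal B},G)$ an object of $\mathrm{GD}_{\mathcal A,\mathcal B}(\mathcal C,\mathcal D)$ with common object map $F_0$. For a morphism $f\colon X\to Y$ of $\mathcal A\cap\mathcal B$, let $E_f$ be the $(\mathcal A,\mathcal B)$-square with $b=f$, $q=f$, $a=1_Y$, $p=1_Y$ and identity $2$-cell, and define $\rho(f)$ as the composite $F_{\mathcal B}(f)\cong F_{\mathcal A}(1_Y)F_{\mathcal B}(f)\xRightarrow{G_{E_f}}F_{\mathcal B}(1_Y)F_{\mathcal A}(f)\cong F_{\mathcal A}(f)$. Then $\rho$, with identity components $\rho(X)=1_{F_0X}$ and $2$-cells $\rho(f)$, is a pseudonatural transformation $F_{\mathcal B}|_{\mathcal A\cap\mathcal B}\to F_{\mathcal A}|_{\mathcal A\cap\mathcal B}$ which is invertible in $\mathrm{PsFun}(\mathcal A\cap\mathcal B,\mathcal D)$. Moreover: (c) for every $(\mathcal A,\mathcal B)$-square $D$ (edges $b\colon X\to Y$, $a\colon Z\to W$, $q\colon X\to Z$, $p\colon Y\to W$, $\alpha\colon aq\Rightarrow pb$) with $p,q$ in $\mathcal A\cap\mathcal B$, the composite $F_{\mathcal A}(a)F_{\mathcal B}(q)\xRightarrow{\rho(q)}F_{\mathcal A}(a)F_{\mathcal A}(q)\cong F_{\mathcal A}(aq)\xRightarrow{F_{\mathcal A}(\alpha)}F_{\mathcal A}(pb)$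 equals $F_{\mathcal A}(a)F_{\mathcal B}(q)\xRightarrow{G_D}F_{\mathcal B}(p)F_{\mathcal A}(b)\xRightarrow{\rho(p)}F_{\mathcal A}(p)F_{\mathcal A}(b)\cong F_{\mathcal A}(pb)$; (c$'$) for every such square with $a,b$ in $\mathcal A\cap\mathcal B$, the composite $F_{\mathcal A}(a)F_{\mathcal B}(q)\xRightarrow{\rho(a)^{-1}}F_{\mathcal B}(a)F_{\mathcal B}(q)\cong F_{\mathcal B}(aq)\xRightarrow{F_{\mathcal B}(\alpha)}F_{\mathcal B}(pb)$ equals $F_{\mathcal A}(a)F_{\mathcal B}(q)\xRightarrow{G_D}F_{\mathcal B}(p)F_{\mathcal A}(b)\xRightarrow{\rho(b)^{-1}}F_{\mathcal B}(p)F_{\mathcal B}(b)\cong F_{\mathcal B}(pb)$.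
   Context: A $(2,1)$-category is a $2$-category whose $2$-cells are all invertible; an arrowy $2$-subcategory has all objects and is full on $2$-cells (hom-inclusions fully faithful and injective on objects). $\cong$ denotes coherence constraints of pseudofunctors; composition is juxtaposition. An $(\mathcal A,\mathcal B)$-square consists of $b\colon X\to Y$, $a\colon Z\to W$ in $\mathcal A$, $q\colon X\to Z$, $p\colon Y\to W$ in $\mathcal B$, and a $2$-cell $\alpha\colon aq\Rightarrow pb$. $\mathrm{GD}_{\mathcal A,\mathcal B}(\mathcal C,\mathcal D)$: objects are triples $(F_{\mathcal A},F_{\mathcal B},G)$ with $F_{\mathcal A}\colon\mathcal A\to\mathcal D$, $F_{\mathcal B}\colon\mathcal B\to\mathcal D$ pseudofunctors with the same object map and $G_D\colon F_{\mathcal A}(a)F_{\mathcal B}(q)\Rightarrow F_{\mathcal B}(p)F_{\mathcal A}(b)$ invertible $2$-cells for all $(\mathcal A,\mathcal B)$-squares $D$, satisfying: (a) for squares with $q=1_X,p=1_Y$, $\alpha\colon a\Rightarrow b$: $F_{\mathcal A}(a)\cong F_{\mathcal A}(a)F_{\mathcal B}(1_X)\xRightarrow{G_D}F_{\mathcal B}(1_Y)F_{\mathcal A}(b)\cong F_{\mathcal A}(b)$ equals $F_{\mathcal A}(\alpha)$; (a$'$) for squares with $b=1_X$, $a=1_Y$, $\alpha\colon q\Rightarrow p$: $F_{\mathcal B}(q)\cong F_{\mathcal A}(1_Y)F_{\mathcal B}(q)\xRightarrow{G_D}F_{\mathcal B}(p)F_{\mathcal A}(1_X)\cong F_{\mathcal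 B}(p)$ equals $F_{\mathcal B}(\alpha)$; (b) for vertically composable squares $D$ (edges $c_1,c_2,q,p$, $\alpha\colon c_2q\Rightarrow pc_1$) and $D'$ (edges $c_2,c_3,q',p'$, $\alpha'\colon c_3q'\Rightarrow p'c_2$) with composite $D''$ (edges $c_1,c_3,q'q,p'p$, $2$-cell $(p'\alpha)(\alpha'q)$): $G_D\circ G_{D'}$ followed by $F_{\mathcal B}(p')F_{\mathcal B}(p)\cong F_{\mathcal B}(p'p)$ equals $G_{D''}$ preceded by $F_{\mathcal B}(q')F_{\mathcal B}(q)\cong F_{\mathcal B}(q'q)$; (b$'$) for horizontally composable squares $D$ (edges $b,a,p_1,p_2$, $\alpha\colon ap_1\Rightarrow p_2b$) and $D'$ (edges $b',a',p_2,p_3$, $\alpha'\colon a'p_2\Rightarrow p_3b'$) with composite $D''$ (edges $b'b,a'a,p_1,p_3$, $2$-cell $(\alpha'b)(a'\alpha)$): $G_{D'}\circ G_D$ followed by $F_{\mathcal A}(b')F_{\mathcal A}(b)\cong F_{\mathcal A}(b'b)$ equals $G_{D''}$ preceded by $F_{\mathcal A}(a')F_{\mathcal A}(a)\cong F_{\mathcal A}(a'a)$. A pseudonatural transformation $\rho\colon F\to F'$ has components $\rho(X)$ and invertible $2$-cells $\rho(f)\colon\rho(Y)F(f)\Rightarrow F'(f)\rho(X)$. *)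

theory Defs
  imports Main
begin

text \<open>A (strict) 2-category, presented by its sets of objects, 1-cells and 2-cells,
together with sources/targets and the identities and compositions.
cmp g f is g after f; vcmp b a is b after a (vertical); hcmp b a is horizontal
composition with a: f => f' (X to Y), b: g => g' (Y to Z), giving g f => g' f'.\<close>

record ('o,'m,'c) tcat =
  Obj  :: "'o set"
  Mor  :: "'m set"
  Cel  :: "'c set"
  src  :: "'m \<Rightarrow> 'o"
  trg  :: "'m \<Rightarrow> 'o"
  dom2 :: "'c \<Rightarrow> 'm"
  cod2 :: "'c \<Rightarrow> 'm"
  idm  :: "'o \<Rightarrow> 'm"
  cmp  :: "'m \<Rightarrow> 'm \<Rightarrow> 'm"
  idc  :: "'m \<Rightarrow> 'c"
  vcmp :: "'c \<Rightarrow> 'c \<Rightarrow> 'c"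
  hcmp :: "'c \<Rightarrow> 'c \<Rightarrow> 'c"

definition twocat :: "('o,'m,'c,'x) tcat_scheme \<Rightarrow> bool" where
  "twocat C \<longleftrightarrow>
    (\<forall>f\<in>Mor C. src C f \<in> Obj C \<and> trg C f \<in> Obj C) \<and>
    (\<forall>X\<in>Obj C. idm C X \<in> Mor C \<and> src C (idm C X) = X \<and> trg C (idm C X) = X) \<and>
    (\<forall>f\<in>Mor C. \<forall>g\<in>Mor C. trg C f = src C g \<longrightarrow>
        cmp C g f \<in> Mor C \<and> src C (cmp C g f) = src C f \<and> trg C (cmp C g f) = trg C g) \<and>
    (\<forall>f\<in>Mor C. \<forall>g\<in>Mor C. \<forall>h\<in>Mor C. trg C f = src C g \<longrightarrow> trg C g = src C h \<longrightarrow>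
        cmp C h (cmp C g f) = cmp C (cmp C h g) f) \<and>
    (\<forall>f\<in>Mor C. cmp C f (idm C (src C f)) = f \<and> cmp C (idm C (trg C f)) f = f) \<and>
    (\<forall>a\<in>Cel C. dom2 C a \<in> Mor C \<and> cod2 C a \<in> Mor C \<and>
        src C (dom2 C a) = src C (cod2 C a) \<and> trg C (dom2 C a) = trg C (cod2 C a)) \<and>
    (\<forall>f\<in>Mor C. idc C f \<in> Cel C \<and> dom2 C (idc C f) = f \<and> cod2 C (idc C f) = f) \<and>
    (\<forall>a\<in>Cel C. \<forall>b\<in>Cel C. cod2 C a = dom2 C b \<longrightarrow>
        vcmp C b a \<in> Cel C \<and> dom2 C (vcmp C b a) = dom2 C a \<and> cod2 C (vcmp C b a) = cod2 C b) \<and>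
    (\<forall>a\<in>Cel C. \<forall>b\<in>Cel C. \<forall>c\<in>Cel C. cod2 C a = dom2 C b \<longrightarrow> cod2 C b = dom2 C c \<longrightarrow>
        vcmp C c (vcmp C b a) = vcmp C (vcmp C c b) a) \<and>
    (\<forall>a\<in>Cel C. vcmp C a (idc C (dom2 C a)) = a \<and> vcmp C (idc C (cod2 C a)) a = a) \<and>
    (\<forall>a\<in>Cel C. \<forall>b\<in>Cel C. trg C (dom2 C a) = src C (dom2 C b) \<longrightarrow>
        hcmp C b a \<in> Cel C \<and> dom2 C (hcmp C b a) = cmp C (dom2 C b) (dom2 C a) \<and>
        cod2 C (hcmp C b a) = cmp C (cod2 C b) (cod2 C a)) \<and>
    (\<forall>a\<in>Cel C. \<forall>b\<in>Cel C. \<forall>c\<in>Cel C.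
        trg C (dom2 C a) = src C (dom2 C b) \<longrightarrow> trg C (dom2 C b) = src C (dom2 C c) \<longrightarrow>
        hcmp C c (hcmp C b a) = hcmp C (hcmp C c b) a) \<and>
    (\<forall>a\<in>Cel C. hcmp C a (idc C (idm C (src C (dom2 C a)))) = a \<and>
                hcmp C (idc C (idm C (trg C (dom2 C a)))) a = a) \<and>
    (\<forall>f\<in>Mor C. \<forall>g\<in>Mor C. trg C f = src C g \<longrightarrow>
        hcmp C (idc C g) (idc C f) = idc C (cmp C g f)) \<and>
    (\<forall>a\<in>Cel C. \<forall>a'\<in>Cel C. \<forall>b\<in>Cel C. \<forall>b'\<in>Cel C.
        cod2 C a = dom2 C a' \<longrightarrow> cod2 C b = dom2 C b' \<longrightarrow> trg C (dom2 C a) = src C (dom2 C b) \<longrightarrow>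
        hcmp C (vcmp C b' b) (vcmp C a' a) = vcmp C (hcmp C b' a') (hcmp C b a))"

definition is_inverse2 :: "('o,'m,'c,'x) tcat_scheme \<Rightarrow> 'c \<Rightarrow> 'c \<Rightarrow> bool" where
  "is_inverse2 C a b \<longleftrightarrow> b \<in> Cel C \<and> dom2 C b = cod2 C a \<and> cod2 C b = dom2 C a \<and>
     vcmp C b a = idc C (dom2 C a) \<and> vcmp C a b = idc C (cod2 C a)"

definition iso2 :: "('o,'m,'c,'x) tcat_scheme \<Rightarrow> 'c \<Rightarrow> bool" where
  "iso2 C a \<longleftrightarrow> a \<in> Cel C \<and> (\<exists>b. is_inverse2 C a b)"

definition inv2 :: "('o,'m,'c,'x) tcat_scheme \<Rightarrow> 'c \<Rightarrow> 'c" where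
  "inv2 C a = (SOME b. is_inverse2 C a b)"

definition two_one_cat :: "('o,'m,'c,'x) tcat_scheme \<Rightarrow> bool" where
  "two_one_cat C \<longleftrightarrow> twocat C \<and> (\<forall>a\<in>Cel C. iso2 C a)"

text \<open>An arrowy 2-subcategory: contains all objects, is full on 2-cells.  Such a
sub-2-category is determined by its set of 1-cells A (closed under identities and
composition); its 2-cells are all 2-cells of C between 1-cells of A.\<close>

definition arrowy_sub :: "('o,'m,'c,'x) tcat_scheme \<Rightarrow> 'm set \<Rightarrow> bool" where
  "arrowy_sub C A \<longleftrightarrow> A \<subseteq> Mor C \<and> (\<forall>X\<in>Obj C. idm C X \<in> A) \<and>
     (\<forall>f\<in>A. \<forall>g\<in>A. trg C f = src C g \<longrightarrow> cmp C g f \<in> A)"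

definition cells_in :: "('o,'m,'c,'x) tcat_scheme \<Rightarrow> 'm set \<Rightarrow> 'c set" where
  "cells_in C A = {a \<in> Cel C. dom2 C a \<in> A \<and> cod2 C a \<in> A}"

text \<open>Data of a pseudofunctor: object map, 1-cell map, 2-cell map,
composition constraints Pc g f : P1 g P1 f => P1 (g f) and
unit constraints Pu X : 1 => P1 (1_X).\<close>

record ('o,'m,'c,'p,'n,'d) psf =
  P0 :: "'o \<Rightarrow> 'p"
  P1 :: "'m \<Rightarrow> 'n"
  P2 :: "'c \<Rightarrow> 'd"
  Pc :: "'m \<Rightarrow> 'm \<Rightarrow> 'd"
  Pu :: "'o \<Rightarrow> 'd"

definition pseudofunctor ::
  "('o,'m,'c,'x) tcat_scheme \<Rightarrow> 'm set \<Rightarrow> ('p,'n,'d,'y) tcat_scheme \<Rightarrow>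
   ('o,'m,'c,'p,'n,'d) psf \<Rightarrow> bool" where
  "pseudofunctor C A D F \<longleftrightarrow>
    (\<forall>X\<in>Obj C. P0 F X \<in> Obj D) \<and>
    (\<forall>f\<in>A. P1 F f \<in> Mor D \<and> src D (P1 F f) = P0 F (src C f) \<and> trg D (P1 F f) = P0 F (trg C f)) \<and>
    (\<forall>a\<in>cells_in C A. P2 F a \<in> Cel D \<and> dom2 D (P2 F a) = P1 F (dom2 C a) \<and>
        cod2 D (P2 F a) = P1 F (cod2 C a)) \<and>
    (\<forall>f\<in>A. P2 F (idc C f) = idc D (P1 F f)) \<and>
    (\<forall>a\<in>cells_in C A. \<forall>b\<in>cells_in C A. cod2 C a = dom2 C b \<longrightarrow>
        P2 F (vcmp C b a) = vcmp D (P2 F b) (P2 F a)) \<and>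
    (\<forall>f\<in>A. \<forall>g\<in>A. trg C f = src C g \<longrightarrow>
        iso2 D (Pc F g f) \<and> dom2 D (Pc F g f) = cmp D (P1 F g) (P1 F f) \<and>
        cod2 D (Pc F g f) = P1 F (cmp C g f)) \<and>
    (\<forall>X\<in>Obj C. iso2 D (Pu F X) \<and> dom2 D (Pu F X) = idm D (P0 F X) \<and>
        cod2 D (Pu F X) = P1 F (idm C X)) \<and>
    (\<forall>a\<in>cells_in C A. \<forall>b\<in>cells_in C A. trg C (dom2 C a) = src C (dom2 C b) \<longrightarrow>
        vcmp D (Pc F (cod2 C b) (cod2 C a)) (hcmp D (P2 F b) (P2 F a)) =
        vcmp D (P2 F (hcmp C b a)) (Pc F (dom2 C b) (dom2 C a))) \<and>
    (\<forall>f\<in>A. \<forall>g\<in>A. \<forall>h\<in>A. trg C f = src C g \<longrightarrow> trg C g = src C h \<longrightarrow>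
        vcmp D (Pc F h (cmp C g f)) (hcmp D (idc D (P1 F h)) (Pc F g f)) =
        vcmp D (Pc F (cmp C h g) f) (hcmp D (Pc F h g) (idc D (P1 F f)))) \<and>
    (\<forall>f\<in>A. vcmp D (Pc F (idm C (trg C f)) f) (hcmp D (Pu F (trg C f)) (idc D (P1 F f)))
              = idc D (P1 F f) \<and>
            vcmp D (Pc F f (idm C (src C f))) (hcmp D (idc D (P1 F f)) (Pu F (src C f)))
              = idc D (P1 F f))"

definition pseudonat ::
  "('o,'m,'c,'x) tcat_scheme \<Rightarrow> 'm set \<Rightarrow> ('p,'n,'d,'y) tcat_scheme \<Rightarrow>
   ('o,'m,'c,'p,'n,'d) psf \<Rightarrow> ('o,'m,'c,'p,'n,'d) psf \<Rightarrow>
   ('o \<Rightarrow> 'n) \<Rightarrow> ('m \<Rightarrow> 'd) \<Rightarrow> bool" where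
  "pseudonat C A D F F' s0 s1 \<longleftrightarrow>
    pseudofunctor C A D F \<and> pseudofunctor C A D F' \<and>
    (\<forall>X\<in>Obj C. s0 X \<in> Mor D \<and> src D (s0 X) = P0 F X \<and> trg D (s0 X) = P0 F' X) \<and>
    (\<forall>f\<in>A. iso2 D (s1 f) \<and>
        dom2 D (s1 f) = cmp D (s0 (trg C f)) (P1 F f) \<and>
        cod2 D (s1 f) = cmp D (P1 F' f) (s0 (src C f))) \<and>
    (\<forall>a\<in>cells_in C A.
        vcmp D (s1 (cod2 C a)) (hcmp D (idc D (s0 (trg C (dom2 C a)))) (P2 F a)) =
        vcmp D (hcmp D (P2 F' a) (idc D (s0 (src C (dom2 C a))))) (s1 (dom2 C a))) \<and>
    (\<forall>f\<in>A. \<forall>g\<in>A. trg C f = src C g \<longrightarrow>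
        vcmp D (s1 (cmp C g f)) (hcmp D (idc D (s0 (trg C g))) (Pc F g f)) =
        vcmp D (hcmp D (Pc F' g f) (idc D (s0 (src C f))))
          (vcmp D (hcmp D (idc D (P1 F' g)) (s1 f))
                  (hcmp D (s1 g) (idc D (P1 F f))))) \<and>
    (\<forall>X\<in>Obj C.
        vcmp D (s1 (idm C X)) (hcmp D (idc D (s0 X)) (Pu F X)) =
        hcmp D (Pu F' X) (idc D (s0 X)))"

text \<open>Invertibility of a pseudonatural transformation as a 1-cell of the 2-category
PsFun: there is a pseudonatural transformation in the other direction whose
(vertical) composites with it, in both orders, are the identity transformations.
The composite t.s has components t0 X s0 X and 2-cells
(t1 f * 1) . (1 * s1 f); the identity transformation has components 1 and 2-cells 1.\<close>

definition invertible_pseudonat ::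
  "('o,'m,'c,'x) tcat_scheme \<Rightarrow> 'm set \<Rightarrow> ('p,'n,'d,'y) tcat_scheme \<Rightarrow>
   ('o,'m,'c,'p,'n,'d) psf \<Rightarrow> ('o,'m,'c,'p,'n,'d) psf \<Rightarrow>
   ('o \<Rightarrow> 'n) \<Rightarrow> ('m \<Rightarrow> 'd) \<Rightarrow> bool" where
  "invertible_pseudonat C A D F F' s0 s1 \<longleftrightarrow>
    pseudonat C A D F F' s0 s1 \<and>
    (\<exists>t0 t1. pseudonat C A D F' F t0 t1 \<and>
       (\<forall>X\<in>Obj C. cmp D (t0 X) (s0 X) = idm D (P0 F X) \<and> cmp D (s0 X) (t0 X) = idm D (P0 F' X)) \<and>
       (\<forall>f\<in>A.
          vcmp D (hcmp D (t1 f) (idc D (s0 (src C f)))) (hcmp D (idc D (t0 (trg C f))) (s1 f))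
            = idc D (P1 F f) \<and>
          vcmp D (hcmp D (s1 f) (idc D (t0 (src C f)))) (hcmp D (idc D (s0 (trg C f))) (t1 f))
            = idc D (P1 F' f)))"

definition ab_square ::
  "('o,'m,'c,'x) tcat_scheme \<Rightarrow> 'm set \<Rightarrow> 'm set \<Rightarrow> 'm \<Rightarrow> 'm \<Rightarrow> 'm \<Rightarrow> 'm \<Rightarrow> 'c \<Rightarrow> bool" where
  "ab_square C A B b a q p al \<longleftrightarrow>
     b \<in> A \<and> a \<in> A \<and> q \<in> B \<and> p \<in> B \<and>
     src C q = src C b \<and> src C p = trg C b \<and> src C a = trg C q \<and> trg C p = trg C a \<and>
     al \<in> Cel C \<and> dom2 C al = cmp C a q \<and> cod2 C al = cmp C p b"

text \<open>Objects (FA, FB, G) of GD_{A,B}(C,D); G b a q p al is the 2-cell G_D for the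
square D with edges b, a, q, p and 2-cell al.\<close>

definition GD_obj ::
  "('o,'m,'c,'x) tcat_scheme \<Rightarrow> 'm set \<Rightarrow> 'm set \<Rightarrow> ('p,'n,'d,'y) tcat_scheme \<Rightarrow>
   ('o,'m,'c,'p,'n,'d) psf \<Rightarrow> ('o,'m,'c,'p,'n,'d) psf \<Rightarrow>
   ('m \<Rightarrow> 'm \<Rightarrow> 'm \<Rightarrow> 'm \<Rightarrow> 'c \<Rightarrow> 'd) \<Rightarrow> bool" where
  "GD_obj C A B D FA FB G \<longleftrightarrow>
    pseudofunctor C A D FA \<and> pseudofunctor C B D FB \<and>
    (\<forall>X\<in>Obj C. P0 FA X = P0 FB X) \<and>
    (\<forall>b a q p al. ab_square C A B b a q p al \<longrightarrow>
        iso2 D (G b a q p al) \<and>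
        dom2 D (G b a q p al) = cmp D (P1 FA a) (P1 FB q) \<and>
        cod2 D (G b a q p al) = cmp D (P1 FB p) (P1 FA b)) \<and>
    \<comment> \<open>(a)\<close>
    (\<forall>b a al. ab_square C A B b a (idm C (src C b)) (idm C (trg C b)) al \<longrightarrow>
        vcmp D (hcmp D (inv2 D (Pu FB (trg C b))) (idc D (P1 FA b)))
          (vcmp D (G b a (idm C (src C b)) (idm C (trg C b)) al)
                  (hcmp D (idc D (P1 FA a)) (Pu FB (src C b))))
        = P2 FA al) \<and>
    \<comment> \<open>(a')\<close>
    (\<forall>q p al. ab_square C A B (idm C (src C q)) (idm C (trg C q)) q p al \<longrightarrow>
        vcmp D (hcmp D (idc D (P1 FB p)) (inv2 D (Pu FA (src C q))))
          (vcmp D (G (idm C (src C q)) (idm C (trg C q)) q p al)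
                  (hcmp D (Pu FA (trg C q)) (idc D (P1 FB q))))
        = P2 FB al) \<and>
    \<comment> \<open>(b) vertical pasting\<close>
    (\<forall>c1 c2 c3 q p q' p' al al'.
        ab_square C A B c1 c2 q p al \<longrightarrow> ab_square C A B c2 c3 q' p' al' \<longrightarrow>
        vcmp D (hcmp D (Pc FB p' p) (idc D (P1 FA c1)))
          (vcmp D (hcmp D (idc D (P1 FB p')) (G c1 c2 q p al))
                  (hcmp D (G c2 c3 q' p' al') (idc D (P1 FB q))))
        = vcmp D (G c1 c3 (cmp C q' q) (cmp C p' p)
                    (vcmp C (hcmp C (idc C p') al) (hcmp C al' (idc C q))))
                 (hcmp D (idc D (P1 FA c3)) (Pc FB q' q))) \<and>
    \<comment> \<open>(b') horizontal pasting\<close>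
    (\<forall>b a b' a' p1 p2 p3 al al'.
        ab_square C A B b a p1 p2 al \<longrightarrow> ab_square C A B b' a' p2 p3 al' \<longrightarrow>
        vcmp D (hcmp D (idc D (P1 FB p3)) (Pc FA b' b))
          (vcmp D (hcmp D (G b' a' p2 p3 al') (idc D (P1 FA b)))
                  (hcmp D (idc D (P1 FA a')) (G b a p1 p2 al)))
        = vcmp D (G (cmp C b' b) (cmp C a' a) p1 p3
                    (vcmp C (hcmp C al' (idc C b)) (hcmp C (idc C a') al)))
                 (hcmp D (Pc FA a' a) (idc D (P1 FB p1))))"

definition rho ::
  "('o,'m,'c,'x) tcat_scheme \<Rightarrow> ('p,'n,'d,'y) tcat_scheme \<Rightarrow>
   ('o,'m,'c,'p,'n,'d) psf \<Rightarrow> ('o,'m,'c,'p,'n,'d) psf \<Rightarrow>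
   ('m \<Rightarrow> 'm \<Rightarrow> 'm \<Rightarrow> 'm \<Rightarrow> 'c \<Rightarrow> 'd) \<Rightarrow> 'm \<Rightarrow> 'd" where
  "rho C D FA FB G f =
     vcmp D (hcmp D (inv2 D (Pu FB (trg C f))) (idc D (P1 FA f)))
       (vcmp D (G f (idm C (trg C f)) f (idm C (trg C f)) (idc C f))
               (hcmp D (Pu FA (trg C f)) (idc D (P1 FB f))))"

end

theory Submission
  imports Defs
begin


locale tc =
  fixes D :: "('p,'n,'d,'y) tcat_scheme"
  assumes tc: "twocat D"
begin

lemmas ax = tc[unfolded twocat_def]
lemmas ax1 = ax[THEN conjunct1]
lemmas axr1 = ax[THEN conjunct2]
lemmas ax2 = axr1[THEN conjunct1]
lemmas axr2 = axr1[THEN conjunct2]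
lemmas ax3 = axr2[THEN conjunct1]
lemmas axr3 = axr2[THEN conjunct2]
lemmas ax4 = axr3[THEN conjunct1]
lemmas axr4 = axr3[THEN conjunct2]
lemmas ax5 = axr4[THEN conjunct1]
lemmas axr5 = axr4[THEN conjunct2]
lemmas ax6 = axr5[THEN conjunct1]
lemmas axr6 = axr5[THEN conjunct2]
lemmas ax7 = axr6[THEN conjunct1]
lemmas axr7 = axr6[THEN conjunct2]
lemmas ax8 = axr7[THEN conjunct1]
lemmas axr8 = axr7[THEN conjunct2]
lemmas ax9 = axr8[THEN conjunct1]
lemmas axr9 = axr8[THEN conjunct2]
lemmas ax10 = axr9[THEN conjunct1]
lemmas axr10 = axr9[THEN conjunct2]
lemmas ax11 = axr10[THEN conjunct1]
lemmas axr11 = axr10[THEN conjunct2]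
lemmas ax12 = axr11[THEN conjunct1]
lemmas axr12 = axr11[THEN conjunct2]
lemmas ax13 = axr12[THEN conjunct1]
lemmas axr13 = axr12[THEN conjunct2]
lemmas ax14 = axr13[THEN conjunct1]
lemmas axr14 = axr13[THEN conjunct2]
lemmas ax15 = axr14

abbreviation V (infixr "\<bullet>" 55) where "b \<bullet> a \<equiv> vcmp D b a"
abbreviation H (infixr "\<star>" 60) where "b \<star> a \<equiv> hcmp D b a"
abbreviation I where "I f \<equiv> idc D f"
abbreviation M (infixr "\<diamond>" 65) where "g \<diamond> f \<equiv> cmp D g f"

lemma src_trg_Mor[simp]: "f \<in> Mor D \<Longrightarrow> src D f \<in> Obj D" "f \<in> Mor D \<Longrightarrow> trg D f \<in> Obj D"
  using ax1 by blast+
lemma idm_typ[simp]: "X \<in> Obj D \<Longrightarrow> idm D X \<in> Mor D" "X \<in> Obj D \<Longrightarrow> src D (idm D X) = X"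
  "X \<in> Obj D \<Longrightarrow> trg D (idm D X) = X"
  using ax2 by blast+
lemma M_typ[simp]: "f \<in> Mor D \<Longrightarrow> g \<in> Mor D \<Longrightarrow> trg D f = src D g \<Longrightarrow> g \<diamond> f \<in> Mor D"
  "f \<in> Mor D \<Longrightarrow> g \<in> Mor D \<Longrightarrow> trg D f = src D g \<Longrightarrow> src D (g \<diamond> f) = src D f"
  "f \<in> Mor D \<Longrightarrow> g \<in> Mor D \<Longrightarrow> trg D f = src D g \<Longrightarrow> trg D (g \<diamond> f) = trg D g"
  using ax3 by blast+
lemma M_assoc[simp]: "f \<in> Mor D \<Longrightarrow> g \<in> Mor D \<Longrightarrow> h \<in> Mor D \<Longrightarrow> trg D f = src D g \<Longrightarrow> trg D g = src D h \<Longrightarrow>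
  (h \<diamond> g) \<diamond> f = h \<diamond> (g \<diamond> f)"
  using ax4 by simp
lemma M_unit[simp]: "f \<in> Mor D \<Longrightarrow> src D f = X \<Longrightarrow> f \<diamond> idm D X = f"
  "f \<in> Mor D \<Longrightarrow> trg D f = Y \<Longrightarrow> idm D Y \<diamond> f = f"
  using ax5 by blast+

lemma cel_typ[simp]: "a \<in> Cel D \<Longrightarrow> dom2 D a \<in> Mor D" "a \<in> Cel D \<Longrightarrow> cod2 D a \<in> Mor D"
  "a \<in> Cel D \<Longrightarrow> src D (cod2 D a) = src D (dom2 D a)"
  "a \<in> Cel D \<Longrightarrow> trg D (cod2 D a) = trg D (dom2 D a)"
  using ax6 by auto
lemma I_typ[simp]: "f \<in> Mor D \<Longrightarrow> I f \<in> Cel D" "f \<in> Mor D \<Longrightarrow> dom2 D (I f) = f"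
  "f \<in> Mor D \<Longrightarrow> cod2 D (I f) = f"
  using ax7 by blast+
lemma V_typ[simp]: "a \<in> Cel D \<Longrightarrow> b \<in> Cel D \<Longrightarrow> cod2 D a = dom2 D b \<Longrightarrow> b \<bullet> a \<in> Cel D"
  "a \<in> Cel D \<Longrightarrow> b \<in> Cel D \<Longrightarrow> cod2 D a = dom2 D b \<Longrightarrow> dom2 D (b \<bullet> a) = dom2 D a"
  "a \<in> Cel D \<Longrightarrow> b \<in> Cel D \<Longrightarrow> cod2 D a = dom2 D b \<Longrightarrow> cod2 D (b \<bullet> a) = cod2 D b"
  using ax8 by blast+
lemma V_assoc[simp]: "a \<in> Cel D \<Longrightarrow> b \<in> Cel D \<Longrightarrow> c \<in> Cel D \<Longrightarrow> cod2 D a = dom2 D b \<Longrightarrow> cod2 D b = dom2 D c \<Longrightarrow>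
  (c \<bullet> b) \<bullet> a = c \<bullet> (b \<bullet> a)"
  using ax9 by simp
lemma V_unit[simp]: "a \<in> Cel D \<Longrightarrow> dom2 D a = f \<Longrightarrow> a \<bullet> I f = a"
  "a \<in> Cel D \<Longrightarrow> cod2 D a = g \<Longrightarrow> I g \<bullet> a = a"
  using ax10 by blast+
lemma H_typ[simp]: "a \<in> Cel D \<Longrightarrow> b \<in> Cel D \<Longrightarrow> trg D (dom2 D a) = src D (dom2 D b) \<Longrightarrow> b \<star> a \<in> Cel D"
  "a \<in> Cel D \<Longrightarrow> b \<in> Cel D \<Longrightarrow> trg D (dom2 D a) = src D (dom2 D b) \<Longrightarrow> dom2 D (b \<star> a) = dom2 D b \<diamond> dom2 D a"
  "a \<in> Cel D \<Longrightarrow> b \<in> Cel D \<Longrightarrow> trg D (dom2 D a) = src D (dom2 D b) \<Longrightarrow> cod2 D (b \<star> a) = cod2 D b \<diamond> cod2 D a"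
  using ax11 by blast+
lemma H_assoc[simp]: "a \<in> Cel D \<Longrightarrow> b \<in> Cel D \<Longrightarrow> c \<in> Cel D \<Longrightarrow>
  trg D (dom2 D a) = src D (dom2 D b) \<Longrightarrow> trg D (dom2 D b) = src D (dom2 D c) \<Longrightarrow>
  (c \<star> b) \<star> a = c \<star> (b \<star> a)"
  using ax12 by simp
lemma H_unit[simp]: "a \<in> Cel D \<Longrightarrow> src D (dom2 D a) = X \<Longrightarrow> a \<star> I (idm D X) = a"
  "a \<in> Cel D \<Longrightarrow> trg D (dom2 D a) = Y \<Longrightarrow> I (idm D Y) \<star> a = a"
  using ax13 by blast+
lemma H_I[simp]: "f \<in> Mor D \<Longrightarrow> g \<in> Mor D \<Longrightarrow> trg D f = src D g \<Longrightarrow> I g \<star> I f = I (g \<diamond> f)"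
  using ax14 by blast+
lemma interchange: "a \<in> Cel D \<Longrightarrow> a' \<in> Cel D \<Longrightarrow> b \<in> Cel D \<Longrightarrow> b' \<in> Cel D \<Longrightarrow>
  cod2 D a = dom2 D a' \<Longrightarrow> cod2 D b = dom2 D b' \<Longrightarrow> trg D (dom2 D a) = src D (dom2 D b) \<Longrightarrow>
  (b' \<bullet> b) \<star> (a' \<bullet> a) = (b' \<star> a') \<bullet> (b \<star> a)"
  using ax15 by blast+

lemma iso_inv: "iso2 D a \<Longrightarrow> is_inverse2 D a (inv2 D a)"
  unfolding iso2_def inv2_def by (metis someI)
lemma iso_cel[simp]: "iso2 D a \<Longrightarrow> a \<in> Cel D"
  unfolding iso2_def by auto
lemma inv_typ[simp]: "iso2 D a \<Longrightarrow> inv2 D a \<in> Cel D"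
  "iso2 D a \<Longrightarrow> dom2 D (inv2 D a) = cod2 D a"
  "iso2 D a \<Longrightarrow> cod2 D (inv2 D a) = dom2 D a"
  using iso_inv unfolding is_inverse2_def by auto
lemma inv_l[simp]: "iso2 D a \<Longrightarrow> inv2 D a \<bullet> a = I (dom2 D a)"
  and inv_r[simp]: "iso2 D a \<Longrightarrow> a \<bullet> inv2 D a = I (cod2 D a)"
  using iso_inv unfolding is_inverse2_def by auto
lemma inv_l_tail[simp]: "iso2 D a \<Longrightarrow> x \<in> Cel D \<Longrightarrow> cod2 D x = dom2 D a \<Longrightarrow> inv2 D a \<bullet> a \<bullet> x = x"
proof -
  assume h: "iso2 D a" "x \<in> Cel D" "cod2 D x = dom2 D a"
  have "inv2 D a \<bullet> a \<bullet> x = (inv2 D a \<bullet> a) \<bullet> x" using h by (intro V_assoc[symmetric]) auto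
  also have "\<dots> = x" using h by simp
  finally show ?thesis .
qed
lemma inv_r_tail[simp]: "iso2 D a \<Longrightarrow> x \<in> Cel D \<Longrightarrow> cod2 D x = cod2 D a \<Longrightarrow> a \<bullet> inv2 D a \<bullet> x = x"
proof -
  assume h: "iso2 D a" "x \<in> Cel D" "cod2 D x = cod2 D a"
  have "a \<bullet> inv2 D a \<bullet> x = (a \<bullet> inv2 D a) \<bullet> x" using h by (intro V_assoc[symmetric]) auto
  also have "\<dots> = x" using h by simp
  finally show ?thesis .
qed
lemma inv_unique: "iso2 D a \<Longrightarrow> b \<in> Cel D \<Longrightarrow> dom2 D b = cod2 D a \<Longrightarrow> b \<bullet> a = I (dom2 D a) \<Longrightarrow> inv2 D a = b"
proof -
  assume h: "iso2 D a" "b \<in> Cel D" "dom2 D b = cod2 D a" "b \<bullet> a = I (dom2 D a)"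
  have "inv2 D a = (b \<bullet> a) \<bullet> inv2 D a" using h by (simp del: V_assoc)
  also have "\<dots> = b \<bullet> (a \<bullet> inv2 D a)" using h by (intro V_assoc) auto
  also have "\<dots> = b" using h by simp
  finally show ?thesis .
qed
lemma iso_I[simp]: "f \<in> Mor D \<Longrightarrow> iso2 D (I f)"
  unfolding iso2_def is_inverse2_def by (rule conjI, simp, rule exI[of _ "I f"], simp)
lemma inv_I[simp]: "f \<in> Mor D \<Longrightarrow> inv2 D (I f) = I f"
  by (rule inv_unique) auto
lemma iso_inv2[simp]: "iso2 D a \<Longrightarrow> iso2 D (inv2 D a)"
  unfolding iso2_def[of D "inv2 D a"] is_inverse2_def by (rule conjI, simp, rule exI[of _ a], simp)
lemma inv_inv[simp]: "iso2 D a \<Longrightarrow> inv2 D (inv2 D a) = a"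
  by (rule inv_unique) auto
lemma iso_V[simp]: "iso2 D a \<Longrightarrow> iso2 D b \<Longrightarrow> cod2 D a = dom2 D b \<Longrightarrow> iso2 D (b \<bullet> a)"
  unfolding iso2_def[of D "b \<bullet> a"] is_inverse2_def
  by (rule conjI, simp, rule exI[of _ "inv2 D a \<bullet> inv2 D b"], simp)
lemma inv_V[simp]: "iso2 D a \<Longrightarrow> iso2 D b \<Longrightarrow> cod2 D a = dom2 D b \<Longrightarrow> inv2 D (b \<bullet> a) = inv2 D a \<bullet> inv2 D b"
  by (rule inv_unique) auto
lemma iso_H_aux: "iso2 D a \<Longrightarrow> iso2 D b \<Longrightarrow> trg D (dom2 D a) = src D (dom2 D b) \<Longrightarrow>
  (inv2 D b \<star> inv2 D a) \<bullet> (b \<star> a) = I (dom2 D (b \<star> a))"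
proof -
  assume h: "iso2 D a" "iso2 D b" "trg D (dom2 D a) = src D (dom2 D b)"
  have "(inv2 D b \<star> inv2 D a) \<bullet> (b \<star> a) = (inv2 D b \<bullet> b) \<star> (inv2 D a \<bullet> a)"
    using h by (subst interchange) auto
  also have "\<dots> = I (dom2 D (b \<star> a))" using h by simp
  finally show ?thesis .
qed
lemma iso_H_aux2: "iso2 D a \<Longrightarrow> iso2 D b \<Longrightarrow> trg D (dom2 D a) = src D (dom2 D b) \<Longrightarrow>
  (b \<star> a) \<bullet> (inv2 D b \<star> inv2 D a) = I (cod2 D (b \<star> a))"
proof -
  assume h: "iso2 D a" "iso2 D b" "trg D (dom2 D a) = src D (dom2 D b)"
  have "(b \<star> a) \<bullet> (inv2 D b \<star> inv2 D a) = (b \<bullet> inv2 D b) \<star> (a \<bullet> inv2 D a)"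
    using h by (subst interchange) auto
  also have "\<dots> = I (cod2 D (b \<star> a))" using h by simp
  finally show ?thesis .
qed
lemma iso_H[simp]: "iso2 D a \<Longrightarrow> iso2 D b \<Longrightarrow> trg D (dom2 D a) = src D (dom2 D b) \<Longrightarrow> iso2 D (b \<star> a)"
  unfolding iso2_def[of D "b \<star> a"] is_inverse2_def
  apply (rule conjI, simp, rule exI[of _ "inv2 D b \<star> inv2 D a"])
  using iso_H_aux iso_H_aux2 by simp
lemma inv_H[simp]: "iso2 D a \<Longrightarrow> iso2 D b \<Longrightarrow> trg D (dom2 D a) = src D (dom2 D b) \<Longrightarrow>
  inv2 D (b \<star> a) = inv2 D b \<star> inv2 D a"
  using iso_H_aux by (intro inv_unique) auto

lemma cancel_r: "iso2 D w \<Longrightarrow> x \<in> Cel D \<Longrightarrow> y \<in> Cel D \<Longrightarrow> dom2 D x = cod2 D w \<Longrightarrow> dom2 D y = cod2 D w \<Longrightarrow>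
  x \<bullet> w = y \<bullet> w \<Longrightarrow> x = y"
proof -
  assume h: "iso2 D w" "x \<in> Cel D" "y \<in> Cel D" "dom2 D x = cod2 D w" "dom2 D y = cod2 D w" "x \<bullet> w = y \<bullet> w"
  have "x = (x \<bullet> w) \<bullet> inv2 D w" using h by (subst V_assoc) auto
  also have "\<dots> = (y \<bullet> w) \<bullet> inv2 D w" using h by (simp del: V_assoc)
  also have "\<dots> = y" using h by simp
  finally show ?thesis .
qed
lemma cancel_l: "iso2 D w \<Longrightarrow> x \<in> Cel D \<Longrightarrow> y \<in> Cel D \<Longrightarrow> cod2 D x = dom2 D w \<Longrightarrow> cod2 D y = dom2 D w \<Longrightarrow>
  w \<bullet> x = w \<bullet> y \<Longrightarrow> x = y"
proof -
  assume h: "iso2 D w" "x \<in> Cel D" "y \<in> Cel D" "cod2 D x = dom2 D w" "cod2 D y = dom2 D w" "w \<bullet> x = w \<bullet> y"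
  have "x = inv2 D w \<bullet> w \<bullet> x" using h(1-5) by simp
  also have "\<dots> = inv2 D w \<bullet> w \<bullet> y" using h by (simp del: inv_l_tail)
  also have "\<dots> = y" using h by simp
  finally show ?thesis .
qed

lemma slide1: "x \<in> Cel D \<Longrightarrow> y \<in> Cel D \<Longrightarrow> trg D (dom2 D y) = src D (dom2 D x) \<Longrightarrow>
  (x \<star> I (cod2 D y)) \<bullet> (I (dom2 D x) \<star> y) = x \<star> y"
  by (subst interchange[symmetric]) auto
lemma slide2: "x \<in> Cel D \<Longrightarrow> y \<in> Cel D \<Longrightarrow> trg D (dom2 D y) = src D (dom2 D x) \<Longrightarrow>
  (I (cod2 D x) \<star> y) \<bullet> (x \<star> I (dom2 D y)) = x \<star> y"
  by (subst interchange[symmetric]) auto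
lemma whisk_l: "y \<in> Cel D \<Longrightarrow> y' \<in> Cel D \<Longrightarrow> cod2 D y = dom2 D y' \<Longrightarrow> g \<in> Mor D \<Longrightarrow> trg D (dom2 D y) = src D g \<Longrightarrow>
  (I g \<star> y') \<bullet> (I g \<star> y) = I g \<star> (y' \<bullet> y)"
  by (subst interchange[symmetric]) auto
lemma whisk_r: "y \<in> Cel D \<Longrightarrow> y' \<in> Cel D \<Longrightarrow> cod2 D y = dom2 D y' \<Longrightarrow> f \<in> Mor D \<Longrightarrow> src D (dom2 D y) = trg D f \<Longrightarrow>
  (y' \<star> I f) \<bullet> (y \<star> I f) = (y' \<bullet> y) \<star> I f"
  by (subst interchange[symmetric]) auto

lemma tailV: "b \<bullet> a = d \<bullet> c \<Longrightarrow> a \<in> Cel D \<Longrightarrow> b \<in> Cel D \<Longrightarrow> c \<in> Cel D \<Longrightarrow> d \<in> Cel D \<Longrightarrow>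
  cod2 D a = dom2 D b \<Longrightarrow> cod2 D c = dom2 D d \<Longrightarrow> t \<in> Cel D \<Longrightarrow> cod2 D t = dom2 D a \<Longrightarrow>
  b \<bullet> a \<bullet> t = d \<bullet> c \<bullet> t"
proof -
  assume h: "b \<bullet> a = d \<bullet> c" "a \<in> Cel D" "b \<in> Cel D" "c \<in> Cel D" "d \<in> Cel D"
  "cod2 D a = dom2 D b" "cod2 D c = dom2 D d" "t \<in> Cel D" "cod2 D t = dom2 D a"
  have e: "dom2 D a = dom2 D c" using h V_typ(2)[of a b] V_typ(2)[of c d] by metis
  have "b \<bullet> a \<bullet> t = (b \<bullet> a) \<bullet> t" using h by (intro V_assoc[symmetric]) auto
  also have "\<dots> = (d \<bullet> c) \<bullet> t" using h by simp
  also have "\<dots> = d \<bullet> c \<bullet> t" using h e by (intro V_assoc) auto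
  finally show ?thesis .
qed

lemma tail2: "b \<bullet> a = c \<Longrightarrow> a \<in> Cel D \<Longrightarrow> b \<in> Cel D \<Longrightarrow>
  cod2 D a = dom2 D b \<Longrightarrow> t \<in> Cel D \<Longrightarrow> cod2 D t = dom2 D a \<Longrightarrow>
  b \<bullet> a \<bullet> t = c \<bullet> t"
  by (subst V_assoc[symmetric]) auto
lemma tail3: "b \<bullet> a \<bullet> z = c \<Longrightarrow> a \<in> Cel D \<Longrightarrow> b \<in> Cel D \<Longrightarrow> z \<in> Cel D \<Longrightarrow>
  cod2 D a = dom2 D b \<Longrightarrow> cod2 D z = dom2 D a \<Longrightarrow> t \<in> Cel D \<Longrightarrow> cod2 D t = dom2 D z \<Longrightarrow>
  b \<bullet> a \<bullet> z \<bullet> t = c \<bullet> t"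
proof -
  assume h: "b \<bullet> a \<bullet> z = c" "a \<in> Cel D" "b \<in> Cel D" "z \<in> Cel D"
    "cod2 D a = dom2 D b" "cod2 D z = dom2 D a" "t \<in> Cel D" "cod2 D t = dom2 D z"
  have "b \<bullet> a \<bullet> z \<bullet> t = b \<bullet> (a \<bullet> z) \<bullet> t" using h V_assoc[of t z a] by auto
  also have "\<dots> = (b \<bullet> a \<bullet> z) \<bullet> t" using h V_assoc[of t "a \<bullet> z" b] by auto
  finally show ?thesis using h(1) by simp
qed

lemma whisk_r3: "x \<in> Cel D \<Longrightarrow> y \<in> Cel D \<Longrightarrow> z \<in> Cel D \<Longrightarrow> cod2 D z = dom2 D y \<Longrightarrow> cod2 D y = dom2 D x \<Longrightarrow>
  f \<in> Mor D \<Longrightarrow> src D (dom2 D z) = trg D f \<Longrightarrow>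
  (x \<bullet> y \<bullet> z) \<star> I f = (x \<star> I f) \<bullet> (y \<star> I f) \<bullet> (z \<star> I f)"
  using whisk_r[of z y f] whisk_r[of "y \<bullet> z" x f] by simp
lemma whisk_l3: "x \<in> Cel D \<Longrightarrow> y \<in> Cel D \<Longrightarrow> z \<in> Cel D \<Longrightarrow> cod2 D z = dom2 D y \<Longrightarrow> cod2 D y = dom2 D x \<Longrightarrow>
  g \<in> Mor D \<Longrightarrow> trg D (dom2 D z) = src D g \<Longrightarrow>
  I g \<star> (x \<bullet> y \<bullet> z) = (I g \<star> x) \<bullet> (I g \<star> y) \<bullet> (I g \<star> z)"
  using whisk_l[of z y g] whisk_l[of "y \<bullet> z" x g] by simp

lemma H_I_split[simp]: "f \<in> Mor D \<Longrightarrow> g \<in> Mor D \<Longrightarrow> trg D f = src D g \<Longrightarrow> x \<in> Cel D \<Longrightarrow> trg D (dom2 D x) = src D f \<Longrightarrow>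
  I (g \<diamond> f) \<star> x = I g \<star> I f \<star> x"
proof -
  assume h: "f \<in> Mor D" "g \<in> Mor D" "trg D f = src D g" "x \<in> Cel D" "trg D (dom2 D x) = src D f"
  have "I g \<star> I f \<star> x = (I g \<star> I f) \<star> x" using h by (intro H_assoc[symmetric]) auto
  then show ?thesis using h by simp
qed

lemma conj_inv: "iso2 D r \<Longrightarrow> iso2 D r' \<Longrightarrow> x \<in> Cel D \<Longrightarrow> y \<in> Cel D \<Longrightarrow>
  dom2 D x = cod2 D r \<Longrightarrow> cod2 D x = cod2 D r' \<Longrightarrow> dom2 D y = dom2 D r \<Longrightarrow> cod2 D y = dom2 D r' \<Longrightarrow>
  x \<bullet> r = r' \<bullet> y \<Longrightarrow> inv2 D r' \<bullet> x = y \<bullet> inv2 D r"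
proof -
  assume h: "iso2 D r" "iso2 D r'" "x \<in> Cel D" "y \<in> Cel D" "dom2 D x = cod2 D r" "cod2 D x = cod2 D r'"
    "dom2 D y = dom2 D r" "cod2 D y = dom2 D r'" "x \<bullet> r = r' \<bullet> y"
  have "inv2 D r' \<bullet> x = inv2 D r' \<bullet> (x \<bullet> r) \<bullet> inv2 D r" using h(1-8) by (simp add: iso_cel)
  also have "\<dots> = inv2 D r' \<bullet> (r' \<bullet> y) \<bullet> inv2 D r" using h(9) by simp
  also have "\<dots> = y \<bullet> inv2 D r" using h(1-8) by (simp add: iso_cel)
  finally show ?thesis .
qed

declare iso_cel[simp del]

end


locale pf = C: tc C + D: tc D
  for C :: "('o,'m,'c,'x) tcat_scheme" and D :: "('p,'n,'d,'y) tcat_scheme" +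
  fixes A :: "'m set" and F :: "('o,'m,'c,'p,'n,'d) psf"
  assumes arrowy: "arrowy_sub C A" and psf: "pseudofunctor C A D F"
begin
lemmas px = psf[unfolded pseudofunctor_def]
lemmas px1 = px[THEN conjunct1]
lemmas px2 = px[THEN conjunct2, THEN conjunct1]
lemmas px3 = px[THEN conjunct2, THEN conjunct2, THEN conjunct1]
lemmas px4 = px[THEN conjunct2, THEN conjunct2, THEN conjunct2, THEN conjunct1]
lemmas px5 = px[THEN conjunct2, THEN conjunct2, THEN conjunct2, THEN conjunct2, THEN conjunct1]
lemmas px6 = px[THEN conjunct2, THEN conjunct2, THEN conjunct2, THEN conjunct2, THEN conjunct2, THEN conjunct1]
lemmas px7 = px[THEN conjunct2, THEN conjunct2, THEN conjunct2, THEN conjunct2, THEN conjunct2, THEN conjunct2, THEN conjunct1]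
lemmas px8 = px[THEN conjunct2, THEN conjunct2, THEN conjunct2, THEN conjunct2, THEN conjunct2, THEN conjunct2, THEN conjunct2, THEN conjunct1]
lemmas px9 = px[THEN conjunct2, THEN conjunct2, THEN conjunct2, THEN conjunct2, THEN conjunct2, THEN conjunct2, THEN conjunct2, THEN conjunct2, THEN conjunct1]
lemmas px10 = px[THEN conjunct2, THEN conjunct2, THEN conjunct2, THEN conjunct2, THEN conjunct2, THEN conjunct2, THEN conjunct2, THEN conjunct2, THEN conjunct2]

lemma A_Mor[simp]: "f \<in> A \<Longrightarrow> f \<in> Mor C" using arrowy unfolding arrowy_sub_def by auto
lemma idm_A[simp]: "X \<in> Obj C \<Longrightarrow> idm C X \<in> A" using arrowy unfolding arrowy_sub_def by auto
lemma cmp_A[simp]: "f \<in> A \<Longrightarrow> g \<in> A \<Longrightarrow> trg C f = src C g \<Longrightarrow> cmp C g f \<in> A"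
  using arrowy unfolding arrowy_sub_def by auto
lemma P0_typ[simp]: "X \<in> Obj C \<Longrightarrow> P0 F X \<in> Obj D" using px1 by blast
lemma P1_typ[simp]: "f \<in> A \<Longrightarrow> P1 F f \<in> Mor D" "f \<in> A \<Longrightarrow> src D (P1 F f) = P0 F (src C f)"
  "f \<in> A \<Longrightarrow> trg D (P1 F f) = P0 F (trg C f)" using px2 by blast+
lemma P2_typ[simp]: "a \<in> Cel C \<Longrightarrow> dom2 C a \<in> A \<Longrightarrow> cod2 C a \<in> A \<Longrightarrow> P2 F a \<in> Cel D"
  "a \<in> Cel C \<Longrightarrow> dom2 C a \<in> A \<Longrightarrow> cod2 C a \<in> A \<Longrightarrow> dom2 D (P2 F a) = P1 F (dom2 C a)"
  "a \<in> Cel C \<Longrightarrow> dom2 C a \<in> A \<Longrightarrow> cod2 C a \<in> A \<Longrightarrow> cod2 D (P2 F a) = P1 F (cod2 C a)"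
  using px3 unfolding cells_in_def by blast+
lemma P2_I[simp]: "f \<in> A \<Longrightarrow> P2 F (idc C f) = idc D (P1 F f)" using px4 by blast
lemma P2_V: "a \<in> Cel C \<Longrightarrow> dom2 C a \<in> A \<Longrightarrow> cod2 C a \<in> A \<Longrightarrow> b \<in> Cel C \<Longrightarrow> dom2 C b \<in> A \<Longrightarrow> cod2 C b \<in> A
  \<Longrightarrow> cod2 C a = dom2 C b \<Longrightarrow> P2 F (vcmp C b a) = P2 F b \<bullet> P2 F a"
  using px5 unfolding cells_in_def by blast
lemma Pc_typ[simp]: "f \<in> A \<Longrightarrow> g \<in> A \<Longrightarrow> trg C f = src C g \<Longrightarrow> iso2 D (Pc F g f)"
  "f \<in> A \<Longrightarrow> g \<in> A \<Longrightarrow> trg C f = src C g \<Longrightarrow> dom2 D (Pc F g f) = P1 F g \<diamond> P1 F f"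
  "f \<in> A \<Longrightarrow> g \<in> A \<Longrightarrow> trg C f = src C g \<Longrightarrow> cod2 D (Pc F g f) = P1 F (cmp C g f)"
  using px6 by blast+
lemma Pu_typ[simp]: "X \<in> Obj C \<Longrightarrow> iso2 D (Pu F X)" "X \<in> Obj C \<Longrightarrow> dom2 D (Pu F X) = idm D (P0 F X)"
  "X \<in> Obj C \<Longrightarrow> cod2 D (Pu F X) = P1 F (idm C X)"
  using px7 by blast+
lemma Pc_cel[simp]: "f \<in> A \<Longrightarrow> g \<in> A \<Longrightarrow> trg C f = src C g \<Longrightarrow> Pc F g f \<in> Cel D"
  using Pc_typ(1) D.iso_cel by blast
lemma Pu_cel[simp]: "X \<in> Obj C \<Longrightarrow> Pu F X \<in> Cel D"
  using Pu_typ(1) D.iso_cel by blast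
lemma Pc_nat: "a \<in> Cel C \<Longrightarrow> dom2 C a \<in> A \<Longrightarrow> cod2 C a \<in> A \<Longrightarrow> b \<in> Cel C \<Longrightarrow> dom2 C b \<in> A \<Longrightarrow> cod2 C b \<in> A
  \<Longrightarrow> trg C (dom2 C a) = src C (dom2 C b) \<Longrightarrow>
   Pc F (cod2 C b) (cod2 C a) \<bullet> (P2 F b \<star> P2 F a) = P2 F (hcmp C b a) \<bullet> Pc F (dom2 C b) (dom2 C a)"
  using px8 unfolding cells_in_def by blast
lemma Pc_assoc: "f \<in> A \<Longrightarrow> g \<in> A \<Longrightarrow> h \<in> A \<Longrightarrow> trg C f = src C g \<Longrightarrow> trg C g = src C h \<Longrightarrow>
  Pc F h (cmp C g f) \<bullet> (D.I (P1 F h) \<star> Pc F g f) = Pc F (cmp C h g) f \<bullet> (Pc F h g \<star> D.I (P1 F f))"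
  using px9 by blast
lemma unit_l: "f \<in> A \<Longrightarrow> Pc F (idm C (trg C f)) f \<bullet> (Pu F (trg C f) \<star> D.I (P1 F f)) = D.I (P1 F f)"
  using px10 by blast
lemma unit_r: "f \<in> A \<Longrightarrow> Pc F f (idm C (src C f)) \<bullet> (D.I (P1 F f) \<star> Pu F (src C f)) = D.I (P1 F f)"
  using px10 by blast
lemma restrict: "A' \<subseteq> A \<Longrightarrow> pseudofunctor C A' D F"
proof -
  assume s: "A' \<subseteq> A"
  have cs: "cells_in C A' \<subseteq> cells_in C A" using s unfolding cells_in_def by auto
  show ?thesis unfolding pseudofunctor_def
  proof (intro conjI)
    show "\<forall>X\<in>Obj C. P0 F X \<in> Obj D" using px1 .
    show "\<forall>f\<in>A'. P1 F f \<in> Mor D \<and> src D (P1 F f) = P0 F (src C f) \<and> trg D (P1 F f) = P0 F (trg C f)" using px2 s by blast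
    show "\<forall>a\<in>cells_in C A'. P2 F a \<in> Cel D \<and> dom2 D (P2 F a) = P1 F (dom2 C a) \<and> cod2 D (P2 F a) = P1 F (cod2 C a)" using px3 cs by blast
    show "\<forall>f\<in>A'. P2 F (idc C f) = idc D (P1 F f)" using px4 s by blast
    show "\<forall>a\<in>cells_in C A'. \<forall>b\<in>cells_in C A'. cod2 C a = dom2 C b \<longrightarrow> P2 F (vcmp C b a) = vcmp D (P2 F b) (P2 F a)"
      using px5 cs by blast
    show "\<forall>f\<in>A'. \<forall>g\<in>A'. trg C f = src C g \<longrightarrow> iso2 D (Pc F g f) \<and> dom2 D (Pc F g f) = cmp D (P1 F g) (P1 F f) \<and>
        cod2 D (Pc F g f) = P1 F (cmp C g f)" using px6 s by blast
    show "\<forall>X\<in>Obj C. iso2 D (Pu F X) \<and> dom2 D (Pu F X) = idm D (P0 F X) \<and> cod2 D (Pu F X) = P1 F (idm C X)" using px7 .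
    show "\<forall>a\<in>cells_in C A'. \<forall>b\<in>cells_in C A'. trg C (dom2 C a) = src C (dom2 C b) \<longrightarrow>
        vcmp D (Pc F (cod2 C b) (cod2 C a)) (hcmp D (P2 F b) (P2 F a)) =
        vcmp D (P2 F (hcmp C b a)) (Pc F (dom2 C b) (dom2 C a))" using px8 cs by blast
    show "\<forall>f\<in>A'. \<forall>g\<in>A'. \<forall>h\<in>A'. trg C f = src C g \<longrightarrow> trg C g = src C h \<longrightarrow>
        vcmp D (Pc F h (cmp C g f)) (hcmp D (idc D (P1 F h)) (Pc F g f)) =
        vcmp D (Pc F (cmp C h g) f) (hcmp D (Pc F h g) (idc D (P1 F f)))" using px9 s by blast
    show "\<forall>f\<in>A'. vcmp D (Pc F (idm C (trg C f)) f) (hcmp D (Pu F (trg C f)) (idc D (P1 F f))) = idc D (P1 F f) \<and>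
            vcmp D (Pc F f (idm C (src C f))) (hcmp D (idc D (P1 F f)) (Pu F (src C f))) = idc D (P1 F f)"
      using px10 s by blast
  qed
qed

end


locale gd = C: tc C + D: tc D
  for C :: "('o,'m,'c) tcat" and D :: "('p,'n,'d) tcat" +
  fixes A B :: "'m set" and FA FB :: "('o,'m,'c,'p,'n,'d) psf"
    and G :: "'m \<Rightarrow> 'm \<Rightarrow> 'm \<Rightarrow> 'm \<Rightarrow> 'c \<Rightarrow> 'd"
  assumes c21: "two_one_cat C" and arA: "arrowy_sub C A" and arB: "arrowy_sub C B"
    and gdo: "GD_obj C A B D FA FB G"
begin
lemmas gx = gdo[unfolded GD_obj_def]
lemma pfA: "pf C D A FA" unfolding pf_def pf_axioms_def using gx arA C.tc_axioms D.tc_axioms by blast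
lemma pfB: "pf C D B FB" unfolding pf_def pf_axioms_def using gx arB C.tc_axioms D.tc_axioms by blast
end

sublocale gd \<subseteq> FA: pf C D A FA by (rule pfA)
sublocale gd \<subseteq> FB: pf C D B FB by (rule pfB)

context gd begin
lemmas gx3 = gx[THEN conjunct2, THEN conjunct2, THEN conjunct1]
lemmas gx4 = gx[THEN conjunct2, THEN conjunct2, THEN conjunct2, THEN conjunct1]
lemmas gx5 = gx[THEN conjunct2, THEN conjunct2, THEN conjunct2, THEN conjunct2, THEN conjunct1]
lemmas gx6 = gx[THEN conjunct2, THEN conjunct2, THEN conjunct2, THEN conjunct2, THEN conjunct2, THEN conjunct1]
lemmas gx7 = gx[THEN conjunct2, THEN conjunct2, THEN conjunct2, THEN conjunct2, THEN conjunct2, THEN conjunct2, THEN conjunct1]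
lemmas gx8 = gx[THEN conjunct2, THEN conjunct2, THEN conjunct2, THEN conjunct2, THEN conjunct2, THEN conjunct2, THEN conjunct2]

lemma P0B[simp]: "X \<in> Obj C \<Longrightarrow> P0 FB X = P0 FA X" using gx3 by auto

lemma sq_unf: "ab_square C A B b a q p al \<Longrightarrow> b \<in> A \<and> a \<in> A \<and> q \<in> B \<and> p \<in> B \<and>
     src C q = src C b \<and> src C p = trg C b \<and> src C a = trg C q \<and> trg C p = trg C a \<and>
     al \<in> Cel C \<and> dom2 C al = cmp C a q \<and> cod2 C al = cmp C p b"
  unfolding ab_square_def by auto

lemma G_typ[simp]: "ab_square C A B b a q p al \<Longrightarrow> iso2 D (G b a q p al)"
  "ab_square C A B b a q p al \<Longrightarrow> dom2 D (G b a q p al) = P1 FA a \<diamond> P1 FB q"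
  "ab_square C A B b a q p al \<Longrightarrow> cod2 D (G b a q p al) = P1 FB p \<diamond> P1 FA b"
  using gx4 by blast+

lemma G_cel[simp]: "ab_square C A B b a q p al \<Longrightarrow> G b a q p al \<in> Cel D"
  using G_typ(1) D.iso_cel by blast
lemma ax_a: "ab_square C A B b a (idm C (src C b)) (idm C (trg C b)) al \<Longrightarrow>
        (inv2 D (Pu FB (trg C b)) \<star> D.I (P1 FA b)) \<bullet>
          (G b a (idm C (src C b)) (idm C (trg C b)) al) \<bullet>
                  (D.I (P1 FA a) \<star> Pu FB (src C b))
        = P2 FA al" using gx5 by blast
lemma ax_a': "ab_square C A B (idm C (src C q)) (idm C (trg C q)) q p al \<Longrightarrow>
        (D.I (P1 FB p) \<star> inv2 D (Pu FA (src C q))) \<bullet>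
          (G (idm C (src C q)) (idm C (trg C q)) q p al) \<bullet>
                  (Pu FA (trg C q) \<star> D.I (P1 FB q))
        = P2 FB al" using gx6 by blast
lemma ax_b: "ab_square C A B c1 c2 q p al \<Longrightarrow> ab_square C A B c2 c3 q' p' al' \<Longrightarrow>
        (Pc FB p' p \<star> D.I (P1 FA c1)) \<bullet>
          (D.I (P1 FB p') \<star> G c1 c2 q p al) \<bullet>
                  (G c2 c3 q' p' al' \<star> D.I (P1 FB q))
        = G c1 c3 (cmp C q' q) (cmp C p' p)
                    (vcmp C (hcmp C (idc C p') al) (hcmp C al' (idc C q))) \<bullet>
                 (D.I (P1 FA c3) \<star> Pc FB q' q)" using gx7 by blast
lemma ax_b': "ab_square C A B b a p1 p2 al \<Longrightarrow> ab_square C A B b' a' p2 p3 al' \<Longrightarrow>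
        (D.I (P1 FB p3) \<star> Pc FA b' b) \<bullet>
          (G b' a' p2 p3 al' \<star> D.I (P1 FA b)) \<bullet>
                  (D.I (P1 FA a') \<star> G b a p1 p2 al)
        = G (cmp C b' b) (cmp C a' a) p1 p3
                    (vcmp C (hcmp C al' (idc C b)) (hcmp C (idc C a') al)) \<bullet>
                 (Pc FA a' a \<star> D.I (P1 FB p1))" using gx8 by blast

abbreviation rh where "rh \<equiv> rho C D FA FB G"

lemma E_sq: "f \<in> A \<Longrightarrow> f \<in> B \<Longrightarrow> ab_square C A B f (idm C (trg C f)) f (idm C (trg C f)) (idc C f)"
  unfolding ab_square_def by simp

lemma rho_typ[simp]: "f \<in> A \<Longrightarrow> f \<in> B \<Longrightarrow> iso2 D (rh f)"
  "f \<in> A \<Longrightarrow> f \<in> B \<Longrightarrow> dom2 D (rh f) = P1 FB f"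
  "f \<in> A \<Longrightarrow> f \<in> B \<Longrightarrow> cod2 D (rh f) = P1 FA f"
  unfolding rho_def using E_sq by simp_all
lemma rho_cel[simp]: "f \<in> A \<Longrightarrow> f \<in> B \<Longrightarrow> rh f \<in> Cel D"
  using rho_typ(1) D.iso_cel by blast

end

context gd begin

lemma c_rhs:
  assumes sq: "ab_square C A B b a q p al" and qA: "q \<in> A" and pA: "p \<in> A"
  shows "Pc FA p b \<bullet> (rh p \<star> D.I (P1 FA b)) \<bullet> G b a q p al =
    (inv2 D (Pu FB (trg C a)) \<star> D.I (P1 FA (cmp C p b))) \<bullet> G (cmp C p b) a q (idm C (trg C a)) al"
proof -
  note s = sq_unf[OF sq]
  have e[simp]: "src C q = src C b" "src C p = trg C b" "src C a = trg C q" "trg C p = trg C a"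
    "b \<in> A" "a \<in> A" "q \<in> B" "p \<in> B" "al \<in> Cel C" "dom2 C al = cmp C a q" "cod2 C al = cmp C p b" "p \<in> A" "q \<in> A" using s pA qA by auto
  have sqE: "ab_square C A B p (idm C (trg C a)) p (idm C (trg C a)) (idc C p)"
    using E_sq[of p] pA by simp
  have sqS: "ab_square C A B (cmp C p b) a q (idm C (trg C a)) al"
    unfolding ab_square_def using pA by simp
  let ?W = "trg C a"
  let ?u = "Pu FA ?W"
  let ?v = "Pu FB ?W"
  let ?Gd = "G b a q p al"
  let ?GE = "G p (idm C (trg C a)) p (idm C (trg C a)) (idc C p)"
  let ?GS = "G (cmp C p b) a q (idm C (trg C a)) al"
  have P1: "(D.I (P1 FB (idm C ?W)) \<star> Pc FA p b) \<bullet> (?GE \<star> D.I (P1 FA b)) \<bullet> (D.I (P1 FA (idm C ?W)) \<star> ?Gd)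
        = ?GS \<bullet> (Pc FA (idm C ?W) a \<star> D.I (P1 FB q))"
    using ax_b'[OF sq sqE] by simp
  have t1: "trg C a \<in> Obj C" by simp
  have t2: "src D (P1 FB (idm C (trg C a))) = P0 FA (trg C a)" by simp
  have t3: "trg D (P1 FA p) = P0 FA (trg C a)" using pA by simp
  have t4: "inv2 D ?v \<star> D.I (P1 FA p) \<in> Cel D" using pA by simp
  have c1: "rh p \<star> D.I (P1 FA b) = (inv2 D ?v \<star> D.I (P1 FA p \<diamond> P1 FA b)) \<bullet> (?GE \<star> D.I (P1 FA b))
     \<bullet> (?u \<star> D.I (P1 FB p \<diamond> P1 FA b))"
    unfolding rho_def using sqE by (subst D.whisk_r3) auto
  have c2: "(?u \<star> D.I (P1 FB p \<diamond> P1 FA b)) \<bullet> ?Gd = (D.I (P1 FA (idm C ?W)) \<star> ?Gd) \<bullet> (?u \<star> D.I (P1 FA a \<diamond> P1 FB q))"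
    using D.slide1[of ?u ?Gd] D.slide2[of ?u ?Gd] sq by simp
  have c3: "Pc FA p b \<bullet> (inv2 D ?v \<star> D.I (P1 FA p \<diamond> P1 FA b)) = 
     (inv2 D ?v \<star> D.I (P1 FA (cmp C p b))) \<bullet> (D.I (P1 FB (idm C ?W)) \<star> Pc FA p b)"
    using D.slide1[of "inv2 D ?v" "Pc FA p b"] D.slide2[of "inv2 D ?v" "Pc FA p b"] by simp
  have c4: "(Pc FA (idm C ?W) a \<star> D.I (P1 FB q)) \<bullet> (?u \<star> D.I (P1 FA a \<diamond> P1 FB q)) = D.I (P1 FA a \<diamond> P1 FB q)"
    using D.whisk_r[of "?u \<star> D.I (P1 FA a)" "Pc FA (idm C ?W) a" "P1 FB q"] FA.unit_l[of a] by simp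
  have "Pc FA p b \<bullet> (rh p \<star> D.I (P1 FA b)) \<bullet> ?Gd = 
    Pc FA p b \<bullet> (inv2 D ?v \<star> D.I (P1 FA p \<diamond> P1 FA b)) \<bullet> (?GE \<star> D.I (P1 FA b))
     \<bullet> (D.I (P1 FA (idm C ?W)) \<star> ?Gd) \<bullet> (?u \<star> D.I (P1 FA a \<diamond> P1 FB q))"
    using sqE sq by (simp add: c1 c2)
  also have "\<dots> = (inv2 D ?v \<star> D.I (P1 FA (cmp C p b))) \<bullet> (D.I (P1 FB (idm C ?W)) \<star> Pc FA p b) \<bullet> (?GE \<star> D.I (P1 FA b))
     \<bullet> (D.I (P1 FA (idm C ?W)) \<star> ?Gd) \<bullet> (?u \<star> D.I (P1 FA a \<diamond> P1 FB q))"
    using sqE sq by (simp add: D.tail2[OF c3])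
  also have "\<dots> = (inv2 D ?v \<star> D.I (P1 FA (cmp C p b))) \<bullet> ?GS \<bullet> (Pc FA (idm C ?W) a \<star> D.I (P1 FB q)) \<bullet> (?u \<star> D.I (P1 FA a \<diamond> P1 FB q))"
    using sqE sq sqS by (simp add: D.tail3[OF P1])
  also have "\<dots> = (inv2 D ?v \<star> D.I (P1 FA (cmp C p b))) \<bullet> ?GS"
    using sqE sq sqS by (simp add: c4)
  finally show ?thesis .
qed
lemma c_lhs:
  assumes sq: "ab_square C A B b a q p al" and qA: "q \<in> A" and pA: "p \<in> A"
  shows "P2 FA al \<bullet> Pc FA a q \<bullet> (D.I (P1 FA a) \<star> rh q) =
    (inv2 D (Pu FB (trg C a)) \<star> D.I (P1 FA (cmp C p b))) \<bullet> G (cmp C p b) a q (idm C (trg C a)) al"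
proof -
  note s = sq_unf[OF sq]
  have e[simp]: "src C q = src C b" "src C p = trg C b" "src C a = trg C q" "trg C p = trg C a"
    "b \<in> A" "a \<in> A" "q \<in> B" "p \<in> B" "al \<in> Cel C" "dom2 C al = cmp C a q" "cod2 C al = cmp C p b" "p \<in> A" "q \<in> A"
    using s pA qA by auto
  let ?W = "trg C a"
  let ?X = "src C b"
  let ?Z = "trg C q"
  let ?GS = "G (cmp C p b) a q (idm C ?W) al"
  let ?GS1 = "G (cmp C p b) (cmp C a q) (idm C ?X) (idm C ?W) al"
  let ?GS2 = "G (cmp C a q) a q (idm C ?W) (idc C (cmp C a q))"
  let ?GD' = "G a a (idm C ?Z) (idm C ?W) (idc C a)"
  let ?GE = "G q (idm C ?Z) q (idm C ?Z) (idc C q)"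
  have sqS: "ab_square C A B (cmp C p b) a q (idm C ?W) al"
    unfolding ab_square_def by simp
  have sqS1: "ab_square C A B (cmp C p b) (cmp C a q) (idm C ?X) (idm C ?W) al"
    unfolding ab_square_def by simp
  have sqS2: "ab_square C A B (cmp C a q) a q (idm C ?W) (idc C (cmp C a q))"
    unfolding ab_square_def by simp
  have sqD': "ab_square C A B a a (idm C ?Z) (idm C ?W) (idc C a)"
    unfolding ab_square_def by simp
  have sqE: "ab_square C A B q (idm C ?Z) q (idm C ?Z) (idc C q)"
    using E_sq[of q] by simp
  have P2: "(Pc FB (idm C ?W) (idm C ?W) \<star> D.I (P1 FA (cmp C p b))) \<bullet> (D.I (P1 FB (idm C ?W)) \<star> ?GS1)
     \<bullet> (?GS2 \<star> D.I (P1 FB (idm C ?X))) = ?GS \<bullet> (D.I (P1 FA a) \<star> Pc FB q (idm C ?X))"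
    using ax_b[OF sqS1 sqS2] by simp
  have P3: "(D.I (P1 FB (idm C ?W)) \<star> Pc FA a q) \<bullet> (?GD' \<star> D.I (P1 FA q)) \<bullet> (D.I (P1 FA a) \<star> ?GE)
     = ?GS2 \<bullet> (Pc FA a (idm C ?Z) \<star> D.I (P1 FB q))"
    using ax_b'[OF sqE sqD'] by simp
  have aS1: "(inv2 D (Pu FB ?W) \<star> D.I (P1 FA (cmp C p b))) \<bullet> ?GS1 \<bullet> (D.I (P1 FA (cmp C a q)) \<star> Pu FB ?X) = P2 FA al"
    using ax_a[of "cmp C p b" "cmp C a q" al] sqS1 by simp
  have aD': "(inv2 D (Pu FB ?W) \<star> D.I (P1 FA a)) \<bullet> ?GD' \<bullet> (D.I (P1 FA a) \<star> Pu FB ?Z) = D.I (P1 FA a)"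
    using ax_a[of a a "idc C a"] sqD' by simp

  let ?u = "Pu FA ?Z"
  let ?vW = "Pu FB ?W"
  let ?vX = "Pu FB ?X"
  let ?vZ = "Pu FB ?Z"
  let ?al = "P2 FA al"
  have d1a: "(D.I (P1 FA a) \<star> Pc FB q (idm C ?X)) \<bullet> (D.I (P1 FA a) \<star> D.I (P1 FB q) \<star> ?vX) = D.I (P1 FA a \<diamond> P1 FB q)"
    using D.whisk_l[of "D.I (P1 FB q) \<star> ?vX" "Pc FB q (idm C ?X)" "P1 FA a"] FB.unit_r[of q] by simp
  have d1b: "(?GS2 \<star> D.I (P1 FB (idm C ?X))) \<bullet> (D.I (P1 FA a) \<star> D.I (P1 FB q) \<star> ?vX) =
     (D.I (P1 FB (idm C ?W)) \<star> D.I (P1 FA (cmp C a q)) \<star> ?vX) \<bullet> ?GS2"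
    using D.slide1[of ?GS2 ?vX] D.slide2[of ?GS2 ?vX] sqS2 by simp
  have d1c: "(D.I (P1 FB (idm C ?W)) \<star> ?GS1) \<bullet> (D.I (P1 FB (idm C ?W)) \<star> D.I (P1 FA (cmp C a q)) \<star> ?vX)
     = D.I (P1 FB (idm C ?W)) \<star> (?GS1 \<bullet> (D.I (P1 FA (cmp C a q)) \<star> ?vX))"
    using D.whisk_l[of "D.I (P1 FA (cmp C a q)) \<star> ?vX" ?GS1 "P1 FB (idm C ?W)"] sqS1 by simp
  have vv: "(?vW \<star> D.I (P1 FA (cmp C p b))) \<bullet> (inv2 D ?vW \<star> D.I (P1 FA (cmp C p b))) = D.I (P1 FB (idm C ?W) \<diamond> P1 FA (cmp C p b))"
    using D.whisk_r[of "inv2 D ?vW" ?vW "P1 FA (cmp C p b)"] by simp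
  have aS1': "?GS1 \<bullet> (D.I (P1 FA (cmp C a q)) \<star> ?vX) = (?vW \<star> D.I (P1 FA (cmp C p b))) \<bullet> ?al"
  proof -
    have "?GS1 \<bullet> (D.I (P1 FA (cmp C a q)) \<star> ?vX) = (?vW \<star> D.I (P1 FA (cmp C p b))) \<bullet> (inv2 D ?vW \<star> D.I (P1 FA (cmp C p b)))
       \<bullet> ?GS1 \<bullet> (D.I (P1 FA (cmp C a q)) \<star> ?vX)" using sqS1 by (simp add: D.tail2[OF vv])
    also have "\<dots> = (?vW \<star> D.I (P1 FA (cmp C p b))) \<bullet> ?al" using sqS1 by (simp add: aS1)
    finally show ?thesis .
  qed
  have d1d: "(Pc FB (idm C ?W) (idm C ?W) \<star> D.I (P1 FA (cmp C p b))) \<bullet> (D.I (P1 FB (idm C ?W)) \<star> ?vW \<star> D.I (P1 FA (cmp C p b)))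
     = D.I (P1 FB (idm C ?W) \<diamond> P1 FA (cmp C p b))"
    using D.whisk_r[of "D.I (P1 FB (idm C ?W)) \<star> ?vW" "Pc FB (idm C ?W) (idm C ?W)" "P1 FA (cmp C p b)"]
      FB.unit_r[of "idm C ?W"] by simp
  have d1e: "D.I (P1 FB (idm C ?W)) \<star> ((?vW \<star> D.I (P1 FA (cmp C p b))) \<bullet> ?al) =
     (D.I (P1 FB (idm C ?W)) \<star> ?vW \<star> D.I (P1 FA (cmp C p b))) \<bullet> (D.I (P1 FB (idm C ?W)) \<star> ?al)"
    using D.whisk_l[of ?al "?vW \<star> D.I (P1 FA (cmp C p b))" "P1 FB (idm C ?W)"] by simp
  have d1: "?GS = (D.I (P1 FB (idm C ?W)) \<star> ?al) \<bullet> ?GS2"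
  proof -
    have "?GS = ?GS \<bullet> (D.I (P1 FA a) \<star> Pc FB q (idm C ?X)) \<bullet> (D.I (P1 FA a) \<star> D.I (P1 FB q) \<star> ?vX)"
      using sqS by (simp add: d1a)
    also have "\<dots> = (Pc FB (idm C ?W) (idm C ?W) \<star> D.I (P1 FA (cmp C p b))) \<bullet> (D.I (P1 FB (idm C ?W)) \<star> ?GS1)
     \<bullet> (?GS2 \<star> D.I (P1 FB (idm C ?X))) \<bullet> (D.I (P1 FA a) \<star> D.I (P1 FB q) \<star> ?vX)"
      using sqS sqS1 sqS2 by (simp add: D.tail2[OF P2[symmetric]])
    also have "\<dots> = (Pc FB (idm C ?W) (idm C ?W) \<star> D.I (P1 FA (cmp C p b))) \<bullet> (D.I (P1 FB (idm C ?W)) \<star> ?GS1)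
     \<bullet> (D.I (P1 FB (idm C ?W)) \<star> D.I (P1 FA (cmp C a q)) \<star> ?vX) \<bullet> ?GS2"
      using sqS sqS1 sqS2 by (simp add: d1b)
    also have "\<dots> = (Pc FB (idm C ?W) (idm C ?W) \<star> D.I (P1 FA (cmp C p b))) \<bullet> 
        (D.I (P1 FB (idm C ?W)) \<star> ((?vW \<star> D.I (P1 FA (cmp C p b))) \<bullet> ?al)) \<bullet> ?GS2"
      using sqS sqS1 sqS2 by (simp add: D.tail2[OF d1c] aS1')
    also have "\<dots> = (Pc FB (idm C ?W) (idm C ?W) \<star> D.I (P1 FA (cmp C p b))) \<bullet> 
        (D.I (P1 FB (idm C ?W)) \<star> ?vW \<star> D.I (P1 FA (cmp C p b))) \<bullet> (D.I (P1 FB (idm C ?W)) \<star> ?al) \<bullet> ?GS2"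
      using sqS sqS1 sqS2 by (simp only: d1e) (simp)
    also have "\<dots> = (D.I (P1 FB (idm C ?W)) \<star> ?al) \<bullet> ?GS2"
      using sqS sqS1 sqS2 by (simp add: D.tail2[OF d1d])
    finally show ?thesis .
  qed
  have d2: "(inv2 D ?vW \<star> D.I (P1 FA (cmp C p b))) \<bullet> (D.I (P1 FB (idm C ?W)) \<star> ?al) =
      ?al \<bullet> (inv2 D ?vW \<star> D.I (P1 FA (cmp C a q)))"
    using D.slide1[of "inv2 D ?vW" ?al] D.slide2[of "inv2 D ?vW" ?al] by simp
  have yy: "(D.I (P1 FA a) \<star> ?vZ) \<bullet> (D.I (P1 FA a) \<star> inv2 D ?vZ) = D.I (P1 FA a \<diamond> P1 FB (idm C ?Z))"
    using D.whisk_l[of "inv2 D ?vZ" ?vZ "P1 FA a"] by simp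
  have aD'': "(inv2 D ?vW \<star> D.I (P1 FA a)) \<bullet> ?GD' = D.I (P1 FA a) \<star> inv2 D ?vZ"
  proof -
    have "(inv2 D ?vW \<star> D.I (P1 FA a)) \<bullet> ?GD' = (inv2 D ?vW \<star> D.I (P1 FA a)) \<bullet> ?GD' \<bullet> (D.I (P1 FA a) \<star> ?vZ) \<bullet> (D.I (P1 FA a) \<star> inv2 D ?vZ)"
      using sqD' by (simp add: yy)
    also have "\<dots> = D.I (P1 FA a) \<star> inv2 D ?vZ" using sqD' by (simp add: D.tail3[OF aD'])
    finally show ?thesis .
  qed
  have d3a: "(inv2 D ?vW \<star> D.I (P1 FA (cmp C a q))) \<bullet> (D.I (P1 FB (idm C ?W)) \<star> Pc FA a q) =
     Pc FA a q \<bullet> (inv2 D ?vW \<star> D.I (P1 FA a \<diamond> P1 FA q))"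
    using D.slide1[of "inv2 D ?vW" "Pc FA a q"] D.slide2[of "inv2 D ?vW" "Pc FA a q"] by simp
  have d3b: "(inv2 D ?vW \<star> D.I (P1 FA a \<diamond> P1 FA q)) \<bullet> (?GD' \<star> D.I (P1 FA q)) = D.I (P1 FA a) \<star> inv2 D ?vZ \<star> D.I (P1 FA q)"
    using D.whisk_r[of ?GD' "inv2 D ?vW \<star> D.I (P1 FA a)" "P1 FA q"] aD'' sqD' by simp
  have d3c: "(D.I (P1 FA a) \<star> inv2 D ?vZ \<star> D.I (P1 FA q)) \<bullet> (D.I (P1 FA a) \<star> ?GE) \<bullet> (D.I (P1 FA a) \<star> ?u \<star> D.I (P1 FB q))
      = D.I (P1 FA a) \<star> rh q"
    unfolding rho_def using sqE by (subst D.whisk_l3) auto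
  have d3d: "(Pc FA a (idm C ?Z) \<star> D.I (P1 FB q)) \<bullet> (D.I (P1 FA a) \<star> ?u \<star> D.I (P1 FB q)) = D.I (P1 FA a \<diamond> P1 FB q)"
    using D.whisk_r[of "D.I (P1 FA a) \<star> ?u" "Pc FA a (idm C ?Z)" "P1 FB q"] FA.unit_r[of a] by simp
  have d3: "(inv2 D ?vW \<star> D.I (P1 FA (cmp C a q))) \<bullet> ?GS2 = Pc FA a q \<bullet> (D.I (P1 FA a) \<star> rh q)"
  proof -
    have "(inv2 D ?vW \<star> D.I (P1 FA (cmp C a q))) \<bullet> ?GS2 = (inv2 D ?vW \<star> D.I (P1 FA (cmp C a q))) \<bullet> ?GS2 \<bullet>
       (Pc FA a (idm C ?Z) \<star> D.I (P1 FB q)) \<bullet> (D.I (P1 FA a) \<star> ?u \<star> D.I (P1 FB q))"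
      using sqS2 by (simp add: d3d)
    also have "\<dots> = (inv2 D ?vW \<star> D.I (P1 FA (cmp C a q))) \<bullet> (D.I (P1 FB (idm C ?W)) \<star> Pc FA a q) \<bullet> (?GD' \<star> D.I (P1 FA q)) \<bullet> (D.I (P1 FA a) \<star> ?GE)
       \<bullet> (D.I (P1 FA a) \<star> ?u \<star> D.I (P1 FB q))"
      using sqS2 sqE sqD' by (simp add: D.tail2[OF P3[symmetric]])
    also have "\<dots> = Pc FA a q \<bullet> (inv2 D ?vW \<star> D.I (P1 FA a \<diamond> P1 FA q)) \<bullet> (?GD' \<star> D.I (P1 FA q)) \<bullet> (D.I (P1 FA a) \<star> ?GE)
       \<bullet> (D.I (P1 FA a) \<star> ?u \<star> D.I (P1 FB q))"
      using sqS2 sqE sqD' by (simp add: D.tail2[OF d3a])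
    also have "\<dots> = Pc FA a q \<bullet> (D.I (P1 FA a) \<star> inv2 D ?vZ \<star> D.I (P1 FA q)) \<bullet> (D.I (P1 FA a) \<star> ?GE)
       \<bullet> (D.I (P1 FA a) \<star> ?u \<star> D.I (P1 FB q))"
      using sqS2 sqE sqD' by (simp add: D.tail2[OF d3b])
    also have "\<dots> = Pc FA a q \<bullet> (D.I (P1 FA a) \<star> rh q)"
      using sqS2 sqE sqD' by (simp only: d3c)
    finally show ?thesis .
  qed
  have "(inv2 D ?vW \<star> D.I (P1 FA (cmp C p b))) \<bullet> ?GS = (inv2 D ?vW \<star> D.I (P1 FA (cmp C p b))) \<bullet> (D.I (P1 FB (idm C ?W)) \<star> ?al) \<bullet> ?GS2"
    by (simp only: d1)
  also have "\<dots> = ?al \<bullet> (inv2 D ?vW \<star> D.I (P1 FA (cmp C a q))) \<bullet> ?GS2"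
    using sqS2 by (simp add: D.tail2[OF d2])
  also have "\<dots> = ?al \<bullet> Pc FA a q \<bullet> (D.I (P1 FA a) \<star> rh q)" by (simp only: d3)
  finally show ?thesis by (rule sym)
qed

end

context gd begin

lemma c_law:
  assumes sq: "ab_square C A B b a q p al" and qA: "q \<in> A" and pA: "p \<in> A"
  shows "P2 FA al \<bullet> Pc FA a q \<bullet> (D.I (P1 FA a) \<star> rh q) = Pc FA p b \<bullet> (rh p \<star> D.I (P1 FA b)) \<bullet> G b a q p al"
  using c_lhs[OF assms] c_rhs[OF assms] by (metis (no_types))

lemma rho_unit:
  assumes X: "X \<in> Obj C"
  shows "rh (idm C X) = Pu FA X \<star> inv2 D (Pu FB X)"
proof -
  have sq: "ab_square C A B (idm C X) (idm C X) (idm C X) (idm C X) (idc C (idm C X))"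
    unfolding ab_square_def using X by simp
  let ?G = "G (idm C X) (idm C X) (idm C X) (idm C X) (idc C (idm C X))"
  have a: "(inv2 D (Pu FB X) \<star> D.I (P1 FA (idm C X))) \<bullet> ?G \<bullet> (D.I (P1 FA (idm C X)) \<star> Pu FB X) = D.I (P1 FA (idm C X))"
    using ax_a[of "idm C X" "idm C X" "idc C (idm C X)"] sq X by simp
  have yy: "(D.I (P1 FA (idm C X)) \<star> Pu FB X) \<bullet> (D.I (P1 FA (idm C X)) \<star> inv2 D (Pu FB X)) = D.I (P1 FA (idm C X) \<diamond> P1 FB (idm C X))"
    using D.whisk_l[of "inv2 D (Pu FB X)" "Pu FB X" "P1 FA (idm C X)"] X by simp
  have a': "(inv2 D (Pu FB X) \<star> D.I (P1 FA (idm C X))) \<bullet> ?G = D.I (P1 FA (idm C X)) \<star> inv2 D (Pu FB X)"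
  proof -
    have "(inv2 D (Pu FB X) \<star> D.I (P1 FA (idm C X))) \<bullet> ?G = (inv2 D (Pu FB X) \<star> D.I (P1 FA (idm C X))) \<bullet> ?G
       \<bullet> (D.I (P1 FA (idm C X)) \<star> Pu FB X) \<bullet> (D.I (P1 FA (idm C X)) \<star> inv2 D (Pu FB X))"
      using sq X by (simp add: yy)
    also have "\<dots> = D.I (P1 FA (idm C X)) \<star> inv2 D (Pu FB X)" using sq X by (simp add: D.tail3[OF a])
    finally show ?thesis .
  qed
  have "rh (idm C X) = (inv2 D (Pu FB X) \<star> D.I (P1 FA (idm C X))) \<bullet> ?G \<bullet> (Pu FA X \<star> D.I (P1 FB (idm C X)))"
    unfolding rho_def using X by simp
  also have "\<dots> = (D.I (P1 FA (idm C X)) \<star> inv2 D (Pu FB X)) \<bullet> (Pu FA X \<star> D.I (P1 FB (idm C X)))"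
    using sq X by (simp add: D.tail2[OF a'])
  also have "\<dots> = Pu FA X \<star> inv2 D (Pu FB X)"
    using D.slide2[of "Pu FA X" "inv2 D (Pu FB X)"] X by simp
  finally show ?thesis .
qed

end

context gd begin
lemma c'_law:
  assumes sq: "ab_square C A B b a q p al" and aB: "a \<in> B" and bB: "b \<in> B"
  shows "P2 FB al \<bullet> Pc FB a q \<bullet> (inv2 D (rh a) \<star> D.I (P1 FB q)) =
         Pc FB p b \<bullet> (D.I (P1 FB p) \<star> inv2 D (rh b)) \<bullet> G b a q p al"
proof -
  note s = sq_unf[OF sq]
  have e[simp]: "src C q = src C b" "src C p = trg C b" "src C a = trg C q" "trg C p = trg C a"
    "b \<in> A" "a \<in> A" "q \<in> B" "p \<in> B" "al \<in> Cel C" "dom2 C al = cmp C a q" "cod2 C al = cmp C p b" "a \<in> B" "b \<in> B"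
    using s aB bB by auto
  let ?W = "trg C a"
  let ?X = "src C b"
  let ?uX = "Pu FA ?X"
  let ?uW = "Pu FA ?W"
  let ?vX = "Pu FB ?X"
  let ?vW = "Pu FB ?W"
  let ?Gd = "G b a q p al"
  let ?GT = "G (idm C ?X) b (idm C ?X) b (idc C b)"
  let ?GS' = "G (idm C ?X) a q (cmp C p b) al"
  let ?GS'' = "G (idm C ?X) (idm C ?W) (cmp C a q) (cmp C p b) al"
  let ?GE = "G a (idm C ?W) a (idm C ?W) (idc C a)"
  let ?R = "Pc FB p b \<bullet> (D.I (P1 FB p) \<star> inv2 D (rh b)) \<bullet> ?Gd"
  have sqT: "ab_square C A B (idm C ?X) b (idm C ?X) b (idc C b)" unfolding ab_square_def by simp
  have sqS': "ab_square C A B (idm C ?X) a q (cmp C p b) al" unfolding ab_square_def by simp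
  have sqS'': "ab_square C A B (idm C ?X) (idm C ?W) (cmp C a q) (cmp C p b) al" unfolding ab_square_def by simp
  have sqE: "ab_square C A B a (idm C ?W) a (idm C ?W) (idc C a)" using E_sq[of a] by simp
  have cT: "P2 FA (idc C b) \<bullet> Pc FA b (idm C ?X) \<bullet> (D.I (P1 FA b) \<star> rh (idm C ?X)) =
     Pc FA b (idm C ?X) \<bullet> (rh b \<star> D.I (P1 FA (idm C ?X))) \<bullet> ?GT"
    using c_law[OF sqT] sqT by simp
  have gT: "?GT = (inv2 D (rh b) \<star> D.I (P1 FA (idm C ?X))) \<bullet> (D.I (P1 FA b) \<star> ?uX \<star> inv2 D ?vX)"
  proof -
    have 1: "D.I (P1 FA b) \<star> rh (idm C ?X) = (rh b \<star> D.I (P1 FA (idm C ?X))) \<bullet> ?GT"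
    proof (rule D.cancel_l[of "Pc FA b (idm C ?X)"])
      show "Pc FA b (idm C ?X) \<bullet> (D.I (P1 FA b) \<star> rh (idm C ?X)) = Pc FA b (idm C ?X) \<bullet> (rh b \<star> D.I (P1 FA (idm C ?X))) \<bullet> ?GT"
        using cT sqT by simp
    qed (use sqT in simp_all)
    have w: "(inv2 D (rh b) \<star> D.I (P1 FA (idm C ?X))) \<bullet> (rh b \<star> D.I (P1 FA (idm C ?X))) = D.I (P1 FB b \<diamond> P1 FA (idm C ?X))"
      using D.whisk_r[of "rh b" "inv2 D (rh b)" "P1 FA (idm C ?X)"] by simp
    have "?GT = (inv2 D (rh b) \<star> D.I (P1 FA (idm C ?X))) \<bullet> (rh b \<star> D.I (P1 FA (idm C ?X))) \<bullet> ?GT"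
      using sqT by (simp add: D.tail2[OF w])
    also have "\<dots> = (inv2 D (rh b) \<star> D.I (P1 FA (idm C ?X))) \<bullet> (D.I (P1 FA b) \<star> rh (idm C ?X))"
      by (simp only: 1)
    finally show ?thesis by (simp add: rho_unit)
  qed
  have st2: "(Pc FB p b \<star> D.I (P1 FA (idm C ?X))) \<bullet> (D.I (P1 FB p) \<star> ?GT) \<bullet> (?Gd \<star> D.I (P1 FB (idm C ?X)))
     = ?GS' \<bullet> (D.I (P1 FA a) \<star> Pc FB q (idm C ?X))"
    using ax_b[OF sqT sq] by simp
  have st3: "(Pc FB (idm C ?W) (cmp C p b) \<star> D.I (P1 FA (idm C ?X))) \<bullet> (D.I (P1 FB (idm C ?W)) \<star> ?GS') \<bullet> (?GE \<star> D.I (P1 FB q))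
     = ?GS'' \<bullet> (D.I (P1 FA (idm C ?W)) \<star> Pc FB a q)"
    using ax_b[OF sqS' sqE] by simp
  have aS: "(D.I (P1 FB (cmp C p b)) \<star> inv2 D ?uX) \<bullet> ?GS'' \<bullet> (?uW \<star> D.I (P1 FB (cmp C a q))) = P2 FB al"
    using ax_a'[of "cmp C a q" "cmp C p b" al] sqS'' by simp

  have h1: "(?uX \<star> inv2 D ?vX) \<bullet> ?vX = ?uX"
  proof -
    have "(?uX \<star> inv2 D ?vX) \<bullet> (D.I (idm D (P0 FA ?X)) \<star> ?vX) = (?uX \<bullet> D.I (idm D (P0 FA ?X))) \<star> (inv2 D ?vX \<bullet> ?vX)"
      by (subst D.interchange) auto
    then show ?thesis by simp
  qed
  have f0: "?GS' = ?GS' \<bullet> (D.I (P1 FA a) \<star> Pc FB q (idm C ?X)) \<bullet> (D.I (P1 FA a) \<star> D.I (P1 FB q) \<star> ?vX)"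
    using D.whisk_l[of "D.I (P1 FB q) \<star> ?vX" "Pc FB q (idm C ?X)" "P1 FA a"] FB.unit_r[of q] sqS' by simp
  have f1: "(?Gd \<star> D.I (P1 FB (idm C ?X))) \<bullet> (D.I (P1 FA a) \<star> D.I (P1 FB q) \<star> ?vX) = (D.I (P1 FB p) \<star> D.I (P1 FA b) \<star> ?vX) \<bullet> ?Gd"
    using D.slide1[of ?Gd ?vX] D.slide2[of ?Gd ?vX] sq by simp
  have f2: "(D.I (P1 FB p) \<star> ?GT) \<bullet> (D.I (P1 FB p) \<star> D.I (P1 FA b) \<star> ?vX) = D.I (P1 FB p) \<star> (?GT \<bullet> (D.I (P1 FA b) \<star> ?vX))"
    using D.whisk_l[of "D.I (P1 FA b) \<star> ?vX" ?GT "P1 FB p"] sqT by simp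
  have f3: "?GT \<bullet> (D.I (P1 FA b) \<star> ?vX) = (inv2 D (rh b) \<star> D.I (P1 FA (idm C ?X))) \<bullet> (D.I (P1 FA b) \<star> ?uX)"
  proof -
    have "(D.I (P1 FA b) \<star> ?uX \<star> inv2 D ?vX) \<bullet> (D.I (P1 FA b) \<star> ?vX) = (D.I (P1 FA b) \<bullet> D.I (P1 FA b)) \<star> ((?uX \<star> inv2 D ?vX) \<bullet> ?vX)"
      by (rule D.interchange[symmetric]) simp_all
    then have "(D.I (P1 FA b) \<star> ?uX \<star> inv2 D ?vX) \<bullet> (D.I (P1 FA b) \<star> ?vX) = D.I (P1 FA b) \<star> ?uX"
      by (simp only: h1) simp
    have "?GT \<bullet> (D.I (P1 FA b) \<star> ?vX) = ((inv2 D (rh b) \<star> D.I (P1 FA (idm C ?X))) \<bullet> (D.I (P1 FA b) \<star> ?uX \<star> inv2 D ?vX)) \<bullet> (D.I (P1 FA b) \<star> ?vX)"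
      by (simp only: gT)
    also have "\<dots> = (inv2 D (rh b) \<star> D.I (P1 FA (idm C ?X))) \<bullet> ((D.I (P1 FA b) \<star> ?uX \<star> inv2 D ?vX) \<bullet> (D.I (P1 FA b) \<star> ?vX))"
      by (rule D.V_assoc) simp_all
    finally show ?thesis by (simp only: \<open>(D.I (P1 FA b) \<star> ?uX \<star> inv2 D ?vX) \<bullet> (D.I (P1 FA b) \<star> ?vX) = D.I (P1 FA b) \<star> ?uX\<close>)
  qed
  have f4: "D.I (P1 FB p) \<star> ((inv2 D (rh b) \<star> D.I (P1 FA (idm C ?X))) \<bullet> (D.I (P1 FA b) \<star> ?uX)) =
     (D.I (P1 FB p) \<star> inv2 D (rh b) \<star> D.I (P1 FA (idm C ?X))) \<bullet> (D.I (P1 FB p) \<star> D.I (P1 FA b) \<star> ?uX)"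
    using D.whisk_l[of "D.I (P1 FA b) \<star> ?uX" "inv2 D (rh b) \<star> D.I (P1 FA (idm C ?X))" "P1 FB p"] by simp
  have f5: "(D.I (P1 FB p) \<star> D.I (P1 FA b) \<star> ?uX) \<bullet> ?Gd = (?Gd \<star> D.I (P1 FA (idm C ?X))) \<bullet> (D.I (P1 FA a) \<star> D.I (P1 FB q) \<star> ?uX)"
    using D.slide1[of ?Gd ?uX] D.slide2[of ?Gd ?uX] sq by simp
  have f6: "(Pc FB p b \<star> D.I (P1 FA (idm C ?X))) \<bullet> (D.I (P1 FB p) \<star> inv2 D (rh b) \<star> D.I (P1 FA (idm C ?X))) \<bullet> (?Gd \<star> D.I (P1 FA (idm C ?X)))
     = ?R \<star> D.I (P1 FA (idm C ?X))"
    using sq by (subst D.whisk_r3) auto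
  have GS': "?GS' = (?R \<star> D.I (P1 FA (idm C ?X))) \<bullet> (D.I (P1 FA a) \<star> D.I (P1 FB q) \<star> ?uX)"
  proof -
    have "?GS' = (Pc FB p b \<star> D.I (P1 FA (idm C ?X))) \<bullet> (D.I (P1 FB p) \<star> ?GT) \<bullet> (?Gd \<star> D.I (P1 FB (idm C ?X))) \<bullet> (D.I (P1 FA a) \<star> D.I (P1 FB q) \<star> ?vX)"
      using sq sqT sqS' by (subst f0) (simp add: D.tail2[OF st2[symmetric]])
    also have "\<dots> = (Pc FB p b \<star> D.I (P1 FA (idm C ?X))) \<bullet> (D.I (P1 FB p) \<star> ?GT) \<bullet> (D.I (P1 FB p) \<star> D.I (P1 FA b) \<star> ?vX) \<bullet> ?Gd"
      using sq sqT by (simp add: f1)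
    also have "\<dots> = (Pc FB p b \<star> D.I (P1 FA (idm C ?X))) \<bullet> (D.I (P1 FB p) \<star> inv2 D (rh b) \<star> D.I (P1 FA (idm C ?X))) \<bullet> (D.I (P1 FB p) \<star> D.I (P1 FA b) \<star> ?uX) \<bullet> ?Gd"
      using sq sqT by (simp add: D.tail2[OF f2] f3 f4)
    also have "\<dots> = (Pc FB p b \<star> D.I (P1 FA (idm C ?X))) \<bullet> (D.I (P1 FB p) \<star> inv2 D (rh b) \<star> D.I (P1 FA (idm C ?X))) \<bullet> (?Gd \<star> D.I (P1 FA (idm C ?X))) \<bullet> (D.I (P1 FA a) \<star> D.I (P1 FB q) \<star> ?uX)"
      using sq sqT by (simp add: f5)
    also have "\<dots> = (?R \<star> D.I (P1 FA (idm C ?X))) \<bullet> (D.I (P1 FA a) \<star> D.I (P1 FB q) \<star> ?uX)"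
      by (rule D.tail3[OF f6]) (use sq sqT in simp_all)
    finally show ?thesis .
  qed

  have e1: "(?uW \<star> D.I (P1 FB (cmp C a q))) \<bullet> Pc FB a q = (D.I (P1 FA (idm C ?W)) \<star> Pc FB a q) \<bullet> (?uW \<star> D.I (P1 FB a \<diamond> P1 FB q))"
    using D.slide1[of ?uW "Pc FB a q"] D.slide2[of ?uW "Pc FB a q"] by simp
  have vv: "(?vW \<star> D.I (P1 FA a)) \<bullet> (inv2 D ?vW \<star> D.I (P1 FA a)) = D.I (P1 FB (idm C ?W) \<diamond> P1 FA a)"
    using D.whisk_r[of "inv2 D ?vW" ?vW "P1 FA a"] by simp
  have e2a: "?GE \<bullet> (?uW \<star> D.I (P1 FB a)) \<bullet> inv2 D (rh a) = ?vW \<star> D.I (P1 FA a)"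
  proof -
    have 1: "(?vW \<star> D.I (P1 FA a)) \<bullet> rh a = ?GE \<bullet> (?uW \<star> D.I (P1 FB a))"
      unfolding rho_def using sqE by (simp add: D.tail2[OF vv])
    have "?GE \<bullet> (?uW \<star> D.I (P1 FB a)) \<bullet> inv2 D (rh a) = (?vW \<star> D.I (P1 FA a)) \<bullet> rh a \<bullet> inv2 D (rh a)"
      using sqE by (simp add: D.tail2[OF 1[symmetric]])
    then show ?thesis by simp
  qed
  have e2: "(?GE \<star> D.I (P1 FB q)) \<bullet> (?uW \<star> D.I (P1 FB a \<diamond> P1 FB q)) \<bullet> (inv2 D (rh a) \<star> D.I (P1 FB q)) = ?vW \<star> D.I (P1 FA a \<diamond> P1 FB q)"
  proof -
    have "(?GE \<bullet> (?uW \<star> D.I (P1 FB a)) \<bullet> inv2 D (rh a)) \<star> D.I (P1 FB q) = 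
      (?GE \<star> D.I (P1 FB q)) \<bullet> ((?uW \<star> D.I (P1 FB a)) \<star> D.I (P1 FB q)) \<bullet> (inv2 D (rh a) \<star> D.I (P1 FB q))"
      using sqE by (intro D.whisk_r3) auto
    then show ?thesis using sqE by (simp add: e2a)
  qed
  have e3: "(D.I (P1 FB (idm C ?W)) \<star> ?GS') \<bullet> (?vW \<star> D.I (P1 FA a \<diamond> P1 FB q)) = (?vW \<star> D.I (P1 FB (cmp C p b) \<diamond> P1 FA (idm C ?X))) \<bullet> ?GS'"
    using D.slide1[of ?vW ?GS'] D.slide2[of ?vW ?GS'] sqS' by simp
  have e4: "(Pc FB (idm C ?W) (cmp C p b) \<star> D.I (P1 FA (idm C ?X))) \<bullet> (?vW \<star> D.I (P1 FB (cmp C p b) \<diamond> P1 FA (idm C ?X))) 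
     = D.I (P1 FB (cmp C p b) \<diamond> P1 FA (idm C ?X))"
    using D.whisk_r[of "?vW \<star> D.I (P1 FB (cmp C p b))" "Pc FB (idm C ?W) (cmp C p b)" "P1 FA (idm C ?X)"] FB.unit_l[of "cmp C p b"]
    by simp
  have e5: "(D.I (P1 FB (cmp C p b)) \<star> inv2 D ?uX) \<bullet> (?R \<star> D.I (P1 FA (idm C ?X))) = ?R \<bullet> (D.I (P1 FA a) \<star> D.I (P1 FB q) \<star> inv2 D ?uX)"
    using D.slide1[of ?R "inv2 D ?uX"] D.slide2[of ?R "inv2 D ?uX"] sq by simp
  have e6: "(D.I (P1 FA a) \<star> D.I (P1 FB q) \<star> inv2 D ?uX) \<bullet> (D.I (P1 FA a) \<star> D.I (P1 FB q) \<star> ?uX) = D.I (P1 FA a \<diamond> P1 FB q)"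
    using D.whisk_l[of "D.I (P1 FB q) \<star> ?uX" "D.I (P1 FB q) \<star> inv2 D ?uX" "P1 FA a"]
      D.whisk_l[of "?uX" "inv2 D ?uX" "P1 FB q"] by simp
  have "P2 FB al \<bullet> Pc FB a q \<bullet> (inv2 D (rh a) \<star> D.I (P1 FB q)) =
    (D.I (P1 FB (cmp C p b)) \<star> inv2 D ?uX) \<bullet> ?GS'' \<bullet> (?uW \<star> D.I (P1 FB (cmp C a q))) \<bullet> Pc FB a q \<bullet> (inv2 D (rh a) \<star> D.I (P1 FB q))"
    using sqS'' by (simp add: aS[symmetric])
  also have "\<dots> = (D.I (P1 FB (cmp C p b)) \<star> inv2 D ?uX) \<bullet> ?GS'' \<bullet> (D.I (P1 FA (idm C ?W)) \<star> Pc FB a q) \<bullet> (?uW \<star> D.I (P1 FB a \<diamond> P1 FB q)) \<bullet> (inv2 D (rh a) \<star> D.I (P1 FB q))"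
    using sqS'' by (simp add: D.tail2[OF e1])
  also have "\<dots> = (D.I (P1 FB (cmp C p b)) \<star> inv2 D ?uX) \<bullet> (Pc FB (idm C ?W) (cmp C p b) \<star> D.I (P1 FA (idm C ?X))) \<bullet> (D.I (P1 FB (idm C ?W)) \<star> ?GS') \<bullet> (?GE \<star> D.I (P1 FB q))
     \<bullet> (?uW \<star> D.I (P1 FB a \<diamond> P1 FB q)) \<bullet> (inv2 D (rh a) \<star> D.I (P1 FB q))"
    using sqS'' sqS' sqE by (simp add: D.tail2[OF st3[symmetric]])
  also have "\<dots> = (D.I (P1 FB (cmp C p b)) \<star> inv2 D ?uX) \<bullet> (Pc FB (idm C ?W) (cmp C p b) \<star> D.I (P1 FA (idm C ?X))) \<bullet> (D.I (P1 FB (idm C ?W)) \<star> ?GS') \<bullet> (?vW \<star> D.I (P1 FA a \<diamond> P1 FB q))"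
    using sqS'' sqS' sqE by (simp only: e2)
  also have "\<dots> = (D.I (P1 FB (cmp C p b)) \<star> inv2 D ?uX) \<bullet> ?GS'"
    using sqS'' sqS' sqE by (simp add: e3 D.tail2[OF e4])
  also have "\<dots> = (D.I (P1 FB (cmp C p b)) \<star> inv2 D ?uX) \<bullet> (?R \<star> D.I (P1 FA (idm C ?X))) \<bullet> (D.I (P1 FA a) \<star> D.I (P1 FB q) \<star> ?uX)"
    by (simp only: GS')
  also have "\<dots> = ?R"
    using sq by (simp add: D.tail2[OF e5] e6)
  finally show ?thesis .
qed

end

context gd begin

lemma rho_nat:
  assumes al: "al \<in> Cel C" and f: "dom2 C al = f" and g: "cod2 C al = g" and fA: "f \<in> A" "f \<in> B" and gA: "g \<in> A" "g \<in> B"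
  shows "P2 FA al \<bullet> rh f = rh g \<bullet> P2 FB al"
proof -
  have st[simp]: "src C g = src C f" "trg C g = trg C f" using al f g C.cel_typ by metis+
  have e[simp]: "dom2 C al = f" "cod2 C al = g" "f \<in> A" "f \<in> B" "g \<in> A" "g \<in> B" "al \<in> Cel C" using assms by auto
  let ?X = "src C f"
  let ?Y = "trg C f"
  let ?G = "G (idm C ?X) (idm C ?Y) f g al"
  have sq: "ab_square C A B (idm C ?X) (idm C ?Y) f g al" unfolding ab_square_def by simp
  have c: "P2 FA al \<bullet> Pc FA (idm C ?Y) f \<bullet> (D.I (P1 FA (idm C ?Y)) \<star> rh f) = Pc FA g (idm C ?X) \<bullet> (rh g \<star> D.I (P1 FA (idm C ?X))) \<bullet> ?G"
    using c_law[OF sq] by simp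
  have a': "(D.I (P1 FB g) \<star> inv2 D (Pu FA ?X)) \<bullet> ?G \<bullet> (Pu FA ?Y \<star> D.I (P1 FB f)) = P2 FB al"
    using ax_a'[of f g al] sq by simp
  have uu: "(D.I (P1 FB g) \<star> Pu FA ?X) \<bullet> (D.I (P1 FB g) \<star> inv2 D (Pu FA ?X)) = D.I (P1 FB g \<diamond> P1 FA (idm C ?X))"
    using D.whisk_l[of "inv2 D (Pu FA ?X)" "Pu FA ?X" "P1 FB g"] by simp
  have a'': "?G \<bullet> (Pu FA ?Y \<star> D.I (P1 FB f)) = (D.I (P1 FB g) \<star> Pu FA ?X) \<bullet> P2 FB al"
  proof -
    have "?G \<bullet> (Pu FA ?Y \<star> D.I (P1 FB f)) = (D.I (P1 FB g) \<star> Pu FA ?X) \<bullet> (D.I (P1 FB g) \<star> inv2 D (Pu FA ?X)) \<bullet> ?G \<bullet> (Pu FA ?Y \<star> D.I (P1 FB f))"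
      using sq by (simp add: D.tail2[OF uu])
    also have "\<dots> = (D.I (P1 FB g) \<star> Pu FA ?X) \<bullet> P2 FB al" using sq by (simp add: a')
    finally show ?thesis .
  qed
  have l1: "(D.I (P1 FA (idm C ?Y)) \<star> rh f) \<bullet> (Pu FA ?Y \<star> D.I (P1 FB f)) = (Pu FA ?Y \<star> D.I (P1 FA f)) \<bullet> rh f"
    using D.slide1[of "Pu FA ?Y" "rh f"] D.slide2[of "Pu FA ?Y" "rh f"] by simp
  have l2: "Pc FA (idm C ?Y) f \<bullet> (Pu FA ?Y \<star> D.I (P1 FA f)) = D.I (P1 FA f)"
    using FA.unit_l[of f] by simp
  have r1: "(rh g \<star> D.I (P1 FA (idm C ?X))) \<bullet> (D.I (P1 FB g) \<star> Pu FA ?X) = (D.I (P1 FA g) \<star> Pu FA ?X) \<bullet> rh g"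
    using D.slide1[of "rh g" "Pu FA ?X"] D.slide2[of "rh g" "Pu FA ?X"] by simp
  have r2: "Pc FA g (idm C ?X) \<bullet> (D.I (P1 FA g) \<star> Pu FA ?X) = D.I (P1 FA g)"
    using FA.unit_r[of g] by simp
  have "P2 FA al \<bullet> rh f = P2 FA al \<bullet> Pc FA (idm C ?Y) f \<bullet> (D.I (P1 FA (idm C ?Y)) \<star> rh f) \<bullet> (Pu FA ?Y \<star> D.I (P1 FB f))"
    by (simp add: l1 D.tail2[OF l2])
  also have "\<dots> = Pc FA g (idm C ?X) \<bullet> (rh g \<star> D.I (P1 FA (idm C ?X))) \<bullet> ?G \<bullet> (Pu FA ?Y \<star> D.I (P1 FB f))"
    using sq by (simp add: D.tail3[OF c])
  also have "\<dots> = rh g \<bullet> P2 FB al"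
    using sq by (simp add: a'' D.tail2[OF r1] D.tail2[OF r2])
  finally show ?thesis .
qed

lemma rho_comp:
  assumes fA: "f \<in> A" "f \<in> B" and gA: "g \<in> A" "g \<in> B" and fg: "trg C f = src C g"
  shows "rh (cmp C g f) \<bullet> Pc FB g f = Pc FA g f \<bullet> (D.I (P1 FA g) \<star> rh f) \<bullet> (rh g \<star> D.I (P1 FB f))"
proof -
  have e[simp]: "f \<in> A" "f \<in> B" "g \<in> A" "g \<in> B" "src C g = trg C f" using assms by auto
  let ?Z = "trg C g"
  let ?uZ = "Pu FA ?Z"
  let ?vZ = "Pu FB ?Z"
  let ?gf = "cmp C g f"
  let ?G1 = "G ?gf g f (idm C ?Z) (idc C ?gf)"
  let ?Eg = "G g (idm C ?Z) g (idm C ?Z) (idc C g)"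
  let ?Egf = "G ?gf (idm C ?Z) ?gf (idm C ?Z) (idc C ?gf)"
  let ?Q = "Pc FA g f \<bullet> (D.I (P1 FA g) \<star> rh f) \<bullet> (rh g \<star> D.I (P1 FB f))"
  have sq1: "ab_square C A B ?gf g f (idm C ?Z) (idc C ?gf)" unfolding ab_square_def by simp
  have sqg: "ab_square C A B g (idm C ?Z) g (idm C ?Z) (idc C g)" using E_sq[of g] by simp
  have sqgf: "ab_square C A B ?gf (idm C ?Z) ?gf (idm C ?Z) (idc C ?gf)" using E_sq[of ?gf] by simp
  have c: "P2 FA (idc C ?gf) \<bullet> Pc FA g f \<bullet> (D.I (P1 FA g) \<star> rh f) = Pc FA (idm C ?Z) ?gf \<bullet> (rh (idm C ?Z) \<star> D.I (P1 FA ?gf)) \<bullet> ?G1"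
    using c_law[OF sq1] sq1 by simp
  have u1: "Pc FA (idm C ?Z) ?gf \<bullet> (?uZ \<star> inv2 D ?vZ \<star> D.I (P1 FA ?gf)) = inv2 D ?vZ \<star> D.I (P1 FA ?gf)"
  proof -
    have "?uZ \<star> inv2 D ?vZ \<star> D.I (P1 FA ?gf) = (?uZ \<star> D.I (P1 FA ?gf)) \<bullet> (inv2 D ?vZ \<star> D.I (P1 FA ?gf))"
      using D.slide1[of ?uZ "inv2 D ?vZ \<star> D.I (P1 FA ?gf)"] by simp
    then show ?thesis using FA.unit_l[of ?gf] by (simp add: D.tail2)
  qed
  have vv: "(?vZ \<star> D.I (P1 FA ?gf)) \<bullet> (inv2 D ?vZ \<star> D.I (P1 FA ?gf)) = D.I (P1 FB (idm C ?Z) \<diamond> P1 FA ?gf)"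
    using D.whisk_r[of "inv2 D ?vZ" ?vZ "P1 FA ?gf"] by simp
  have G1: "?G1 = (?vZ \<star> D.I (P1 FA ?gf)) \<bullet> Pc FA g f \<bullet> (D.I (P1 FA g) \<star> rh f)"
  proof -
    have 1: "Pc FA g f \<bullet> (D.I (P1 FA g) \<star> rh f) = (inv2 D ?vZ \<star> D.I (P1 FA ?gf)) \<bullet> ?G1"
      using c sq1 by (simp add: rho_unit D.tail2[OF u1])
    have "?G1 = (?vZ \<star> D.I (P1 FA ?gf)) \<bullet> (inv2 D ?vZ \<star> D.I (P1 FA ?gf)) \<bullet> ?G1"
      using sq1 by (simp add: D.tail2[OF vv])
    also have "\<dots> = (?vZ \<star> D.I (P1 FA ?gf)) \<bullet> Pc FA g f \<bullet> (D.I (P1 FA g) \<star> rh f)"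
      by (simp only: 1)
    finally show ?thesis .
  qed
  have vvg: "(?vZ \<star> D.I (P1 FA g)) \<bullet> (inv2 D ?vZ \<star> D.I (P1 FA g)) = D.I (P1 FB (idm C ?Z) \<diamond> P1 FA g)"
    using D.whisk_r[of "inv2 D ?vZ" ?vZ "P1 FA g"] by simp
  have uug: "(?uZ \<star> D.I (P1 FB g)) \<bullet> (inv2 D ?uZ \<star> D.I (P1 FB g)) = D.I (P1 FA (idm C ?Z) \<diamond> P1 FB g)"
    using D.whisk_r[of "inv2 D ?uZ" ?uZ "P1 FB g"] by simp
  have Eg: "?Eg = (?vZ \<star> D.I (P1 FA g)) \<bullet> rh g \<bullet> (inv2 D ?uZ \<star> D.I (P1 FB g))"
  proof -
    have "?Eg = (?vZ \<star> D.I (P1 FA g)) \<bullet> (inv2 D ?vZ \<star> D.I (P1 FA g)) \<bullet> ?Eg \<bullet> (?uZ \<star> D.I (P1 FB g)) \<bullet> (inv2 D ?uZ \<star> D.I (P1 FB g))"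
      using sqg by (simp add: D.tail2[OF vvg] uug)
    then show ?thesis unfolding rho_def using sqg by simp
  qed
  have vvgf: "(?vZ \<star> D.I (P1 FA ?gf)) \<bullet> (inv2 D ?vZ \<star> D.I (P1 FA ?gf)) = D.I (P1 FB (idm C ?Z) \<diamond> P1 FA ?gf)"
    using D.whisk_r[of "inv2 D ?vZ" ?vZ "P1 FA ?gf"] by simp
  have uugf: "(?uZ \<star> D.I (P1 FB ?gf)) \<bullet> (inv2 D ?uZ \<star> D.I (P1 FB ?gf)) = D.I (P1 FA (idm C ?Z) \<diamond> P1 FB ?gf)"
    using D.whisk_r[of "inv2 D ?uZ" ?uZ "P1 FB ?gf"] by simp
  have Egf: "?Egf = (?vZ \<star> D.I (P1 FA ?gf)) \<bullet> rh ?gf \<bullet> (inv2 D ?uZ \<star> D.I (P1 FB ?gf))"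
  proof -
    have "?Egf = (?vZ \<star> D.I (P1 FA ?gf)) \<bullet> (inv2 D ?vZ \<star> D.I (P1 FA ?gf)) \<bullet> ?Egf \<bullet> (?uZ \<star> D.I (P1 FB ?gf)) \<bullet> (inv2 D ?uZ \<star> D.I (P1 FB ?gf))"
      using sqgf by (simp add: D.tail2[OF vvgf] uugf)
    then show ?thesis unfolding rho_def using sqgf by simp
  qed
  have b: "(Pc FB (idm C ?Z) (idm C ?Z) \<star> D.I (P1 FA ?gf)) \<bullet> (D.I (P1 FB (idm C ?Z)) \<star> ?G1) \<bullet> (?Eg \<star> D.I (P1 FB f))
     = ?Egf \<bullet> (D.I (P1 FA (idm C ?Z)) \<star> Pc FB g f)"
    using ax_b[OF sq1 sqg] by simp

  let ?W = "inv2 D ?uZ \<star> D.I (P1 FB g \<diamond> P1 FB f)"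
  have w1: "D.I (P1 FB (idm C ?Z)) \<star> ?G1 = (D.I (P1 FB (idm C ?Z)) \<star> ?vZ \<star> D.I (P1 FA ?gf)) \<bullet> (D.I (P1 FB (idm C ?Z)) \<star> Pc FA g f)
     \<bullet> (D.I (P1 FB (idm C ?Z)) \<star> D.I (P1 FA g) \<star> rh f)"
    by (simp only: G1) (subst D.whisk_l3; simp)
  have w2: "?Eg \<star> D.I (P1 FB f) = (?vZ \<star> D.I (P1 FA g \<diamond> P1 FB f)) \<bullet> (rh g \<star> D.I (P1 FB f)) \<bullet> (inv2 D ?uZ \<star> D.I (P1 FB g \<diamond> P1 FB f))"
    by (simp only: Eg) (subst D.whisk_r3; simp)
  have w3: "(Pc FB (idm C ?Z) (idm C ?Z) \<star> D.I (P1 FA ?gf)) \<bullet> (D.I (P1 FB (idm C ?Z)) \<star> ?vZ \<star> D.I (P1 FA ?gf)) = D.I (P1 FB (idm C ?Z) \<diamond> P1 FA ?gf)"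
    using D.whisk_r[of "D.I (P1 FB (idm C ?Z)) \<star> ?vZ" "Pc FB (idm C ?Z) (idm C ?Z)" "P1 FA ?gf"] FB.unit_r[of "idm C ?Z"] by simp
  have w4: "(D.I (P1 FB (idm C ?Z)) \<star> D.I (P1 FA g) \<star> rh f) \<bullet> (?vZ \<star> D.I (P1 FA g \<diamond> P1 FB f)) = (?vZ \<star> D.I (P1 FA g \<diamond> P1 FA f)) \<bullet> (D.I (P1 FA g) \<star> rh f)"
    using D.slide1[of ?vZ "D.I (P1 FA g) \<star> rh f"] D.slide2[of ?vZ "D.I (P1 FA g) \<star> rh f"] by simp
  have w5: "(D.I (P1 FB (idm C ?Z)) \<star> Pc FA g f) \<bullet> (?vZ \<star> D.I (P1 FA g \<diamond> P1 FA f)) = (?vZ \<star> D.I (P1 FA ?gf)) \<bullet> Pc FA g f"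
    using D.slide1[of ?vZ "Pc FA g f"] D.slide2[of ?vZ "Pc FA g f"] by simp
  have w6: "(inv2 D ?uZ \<star> D.I (P1 FB ?gf)) \<bullet> (D.I (P1 FA (idm C ?Z)) \<star> Pc FB g f) = Pc FB g f \<bullet> ?W"
    using D.slide1[of "inv2 D ?uZ" "Pc FB g f"] D.slide2[of "inv2 D ?uZ" "Pc FB g f"] by simp
  have eq: "(?vZ \<star> D.I (P1 FA ?gf)) \<bullet> ?Q \<bullet> ?W = (?vZ \<star> D.I (P1 FA ?gf)) \<bullet> rh ?gf \<bullet> Pc FB g f \<bullet> ?W"
  proof -
    have "(?vZ \<star> D.I (P1 FA ?gf)) \<bullet> ?Q \<bullet> ?W = (Pc FB (idm C ?Z) (idm C ?Z) \<star> D.I (P1 FA ?gf)) \<bullet> (D.I (P1 FB (idm C ?Z)) \<star> ?G1) \<bullet> (?Eg \<star> D.I (P1 FB f))"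
      using sq1 sqg by (simp add: w1 w2 D.tail2[OF w3] D.tail2[OF w4] D.tail2[OF w5])
    also have "\<dots> = ?Egf \<bullet> (D.I (P1 FA (idm C ?Z)) \<star> Pc FB g f)" by (rule b)
    also have "\<dots> = (?vZ \<star> D.I (P1 FA ?gf)) \<bullet> rh ?gf \<bullet> Pc FB g f \<bullet> ?W"
      using sqgf by (simp add: Egf w6)
    finally show ?thesis .
  qed
  have eq2: "?Q \<bullet> ?W = (rh ?gf \<bullet> Pc FB g f) \<bullet> ?W"
    by (rule D.cancel_l[of "?vZ \<star> D.I (P1 FA ?gf)"]) (use eq in simp_all)
  have "?Q = rh ?gf \<bullet> Pc FB g f"
    by (rule D.cancel_r[of ?W]) (use eq2 in simp_all)
  then show ?thesis by simp
qed

lemma rho_unit_law: "X \<in> Obj C \<Longrightarrow> rh (idm C X) \<bullet> Pu FB X = Pu FA X"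
proof -
  assume X: "X \<in> Obj C"
  have "(Pu FA X \<star> inv2 D (Pu FB X)) \<bullet> (D.I (idm D (P0 FA X)) \<star> Pu FB X) = (Pu FA X \<bullet> D.I (idm D (P0 FA X))) \<star> (inv2 D (Pu FB X) \<bullet> Pu FB X)"
    using X by (subst D.interchange) auto
  then show ?thesis using X by (simp add: rho_unit)
qed

lemma pn: "pseudonat C (A \<inter> B) D FB FA (\<lambda>X. idm D (P0 FA X)) rh"
  unfolding pseudonat_def
proof (intro conjI ballI impI)
  show "pseudofunctor C (A \<inter> B) D FB" by (rule FB.restrict) auto
  show "pseudofunctor C (A \<inter> B) D FA" by (rule FA.restrict) auto
next
  fix X assume X: "X \<in> Obj C"
  show "idm D (P0 FA X) \<in> Mor D" "src D (idm D (P0 FA X)) = P0 FB X" "trg D (idm D (P0 FA X)) = P0 FA X"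
    using X by simp_all
  show "rh (idm C X) \<bullet> (D.I (idm D (P0 FA X)) \<star> Pu FB X) = Pu FA X \<star> D.I (idm D (P0 FA X))"
    using X rho_unit_law[OF X] by simp
next
  fix f assume f: "f \<in> A \<inter> B"
  show "iso2 D (rh f)" "dom2 D (rh f) = idm D (P0 FA (trg C f)) \<diamond> P1 FB f"
    "cod2 D (rh f) = P1 FA f \<diamond> idm D (P0 FA (src C f))" using f by simp_all
next
  fix a assume a: "a \<in> cells_in C (A \<inter> B)"
  then have a': "a \<in> Cel C" "dom2 C a \<in> A" "dom2 C a \<in> B" "cod2 C a \<in> A" "cod2 C a \<in> B" unfolding cells_in_def by auto
  have n: "P2 FA a \<bullet> rh (dom2 C a) = rh (cod2 C a) \<bullet> P2 FB a" using rho_nat[OF a'(1) refl refl] a' by simp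
  show "rh (cod2 C a) \<bullet> (D.I (idm D (P0 FA (trg C (dom2 C a)))) \<star> P2 FB a) =
        (P2 FA a \<star> D.I (idm D (P0 FA (src C (dom2 C a))))) \<bullet> rh (dom2 C a)"
    using a' n by simp
next
  fix f g assume f: "f \<in> A \<inter> B" and g: "g \<in> A \<inter> B" and fg: "trg C f = src C g"
  show "rh (cmp C g f) \<bullet> (D.I (idm D (P0 FA (trg C g))) \<star> Pc FB g f) =
        (Pc FA g f \<star> D.I (idm D (P0 FA (src C f)))) \<bullet> (D.I (P1 FA g) \<star> rh f) \<bullet> (rh g \<star> D.I (P1 FB f))"
    using rho_comp[of f g] f g fg by simp
qed

lemma pn_inv: "pseudonat C (A \<inter> B) D FA FB (\<lambda>X. idm D (P0 FA X)) (\<lambda>f. inv2 D (rh f))"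
  unfolding pseudonat_def
proof (intro conjI ballI impI)
  show "pseudofunctor C (A \<inter> B) D FB" by (rule FB.restrict) auto
  show "pseudofunctor C (A \<inter> B) D FA" by (rule FA.restrict) auto
next
  fix X assume X: "X \<in> Obj C"
  show "idm D (P0 FA X) \<in> Mor D" "src D (idm D (P0 FA X)) = P0 FA X" "trg D (idm D (P0 FA X)) = P0 FB X"
    using X by simp_all
  have "inv2 D (rh (idm C X)) \<bullet> Pu FA X = Pu FB X"
    using X rho_unit_law[OF X] D.inv_l_tail[of "rh (idm C X)" "Pu FB X"] by simp
  then show "inv2 D (rh (idm C X)) \<bullet> (D.I (idm D (P0 FA X)) \<star> Pu FA X) = Pu FB X \<star> D.I (idm D (P0 FA X))"
    using X by simp
next
  fix f assume f: "f \<in> A \<inter> B"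
  show "iso2 D (inv2 D (rh f))" "dom2 D (inv2 D (rh f)) = idm D (P0 FA (trg C f)) \<diamond> P1 FA f"
    "cod2 D (inv2 D (rh f)) = P1 FB f \<diamond> idm D (P0 FA (src C f))" using f by simp_all
next
  fix a assume a: "a \<in> cells_in C (A \<inter> B)"
  then have a': "a \<in> Cel C" "dom2 C a \<in> A" "dom2 C a \<in> B" "cod2 C a \<in> A" "cod2 C a \<in> B" unfolding cells_in_def by auto
  have n: "P2 FA a \<bullet> rh (dom2 C a) = rh (cod2 C a) \<bullet> P2 FB a" using rho_nat[OF a'(1) refl refl] a' by simp
  have n': "inv2 D (rh (cod2 C a)) \<bullet> P2 FA a = P2 FB a \<bullet> inv2 D (rh (dom2 C a))"
    by (rule D.conj_inv[OF _ _ _ _ _ _ _ _ n]) (use a' in \<open>simp_all add: D.iso_cel\<close>)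
  show "inv2 D (rh (cod2 C a)) \<bullet> (D.I (idm D (P0 FA (trg C (dom2 C a)))) \<star> P2 FA a) =
        (P2 FB a \<star> D.I (idm D (P0 FA (src C (dom2 C a))))) \<bullet> inv2 D (rh (dom2 C a))"
    using a' n' by simp
next
  fix f g assume f: "f \<in> A \<inter> B" and g: "g \<in> A \<inter> B" and fg: "trg C f = src C g"
  have c: "Pc FA g f \<bullet> ((D.I (P1 FA g) \<star> rh f) \<bullet> (rh g \<star> D.I (P1 FB f))) = rh (cmp C g f) \<bullet> Pc FB g f"
    using rho_comp[of f g] f g fg by simp
  have k: "(D.I (P1 FA g) \<star> rh f) \<bullet> (rh g \<star> D.I (P1 FB f)) = rh g \<star> rh f"
    using D.slide2[of "rh g" "rh f"] f g fg by simp
  have k': "(D.I (P1 FB g) \<star> inv2 D (rh f)) \<bullet> (inv2 D (rh g) \<star> D.I (P1 FA f)) = inv2 D (rh g) \<star> inv2 D (rh f)"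
    using D.slide2[of "inv2 D (rh g)" "inv2 D (rh f)"] f g fg by simp
  have c': "inv2 D (rh (cmp C g f)) \<bullet> Pc FA g f = Pc FB g f \<bullet> inv2 D ((D.I (P1 FA g) \<star> rh f) \<bullet> (rh g \<star> D.I (P1 FB f)))"
    by (rule D.conj_inv[OF _ _ _ _ _ _ _ _ c]) (use f g fg in \<open>simp_all add: k D.iso_cel\<close>)
  show "inv2 D (rh (cmp C g f)) \<bullet> (D.I (idm D (P0 FA (trg C g))) \<star> Pc FA g f) =
        (Pc FB g f \<star> D.I (idm D (P0 FA (src C f)))) \<bullet> (D.I (P1 FB g) \<star> inv2 D (rh f)) \<bullet> (inv2 D (rh g) \<star> D.I (P1 FA f))"
    using c' f g fg by (simp add: k k')
qed

lemma inv_pn: "invertible_pseudonat C (A \<inter> B) D FB FA (\<lambda>X. idm D (P0 FA X)) rh"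
  unfolding invertible_pseudonat_def
proof (intro conjI)
  show "pseudonat C (A \<inter> B) D FB FA (\<lambda>X. idm D (P0 FA X)) rh" by (rule pn)
  show "\<exists>t0 t1. pseudonat C (A \<inter> B) D FA FB t0 t1 \<and>
       (\<forall>X\<in>Obj C. t0 X \<diamond> idm D (P0 FA X) = idm D (P0 FB X) \<and> idm D (P0 FA X) \<diamond> t0 X = idm D (P0 FA X)) \<and>
       (\<forall>f\<in>A \<inter> B.
          (t1 f \<star> D.I (idm D (P0 FA (src C f)))) \<bullet> (D.I (t0 (trg C f)) \<star> rh f) = D.I (P1 FB f) \<and>
          (rh f \<star> D.I (t0 (src C f))) \<bullet> (D.I (idm D (P0 FA (trg C f))) \<star> t1 f) = D.I (P1 FA f))"
    by (rule exI[of _ "\<lambda>X. idm D (P0 FA X)"], rule exI[of _ "\<lambda>f. inv2 D (rh f)"]) (simp add: pn_inv)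
qed

end

theorem mainTheorem8:
  fixes C :: "('o,'m,'c) tcat" and D :: "('p,'n,'d) tcat"
    and A B :: "'m set"
    and FA FB :: "('o,'m,'c,'p,'n,'d) psf"
    and G :: "'m \<Rightarrow> 'm \<Rightarrow> 'm \<Rightarrow> 'm \<Rightarrow> 'c \<Rightarrow> 'd"
  assumes "two_one_cat C"
    and "arrowy_sub C A" and "arrowy_sub C B"
    and "twocat D"
    and "GD_obj C A B D FA FB G"
  shows "invertible_pseudonat C (A \<inter> B) D FB FA (\<lambda>X. idm D (P0 FA X)) (rho C D FA FB G)
    \<and> (\<forall>b a q p al. ab_square C A B b a q p al \<longrightarrow> q \<in> A \<inter> B \<longrightarrow> p \<in> A \<inter> B \<longrightarrow>
          vcmp D (P2 FA al) (vcmp D (Pc FA a q) (hcmp D (idc D (P1 FA a)) (rho C D FA FB G q)))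
          = vcmp D (Pc FA p b) (vcmp D (hcmp D (rho C D FA FB G p) (idc D (P1 FA b))) (G b a q p al)))
    \<and> (\<forall>b a q p al. ab_square C A B b a q p al \<longrightarrow> a \<in> A \<inter> B \<longrightarrow> b \<in> A \<inter> B \<longrightarrow>
          vcmp D (P2 FB al) (vcmp D (Pc FB a q) (hcmp D (inv2 D (rho C D FA FB G a)) (idc D (P1 FB q))))
          = vcmp D (Pc FB p b) (vcmp D (hcmp D (idc D (P1 FB p)) (inv2 D (rho C D FA FB G b))) (G b a q p al)))"
proof -
  interpret gd C D A B FA FB G
    using assms unfolding gd_def gd_axioms_def tc_def two_one_cat_def by auto
  show ?thesis
  proof (intro conjI allI impI)
    show "invertible_pseudonat C (A \<inter> B) D FB FA (\<lambda>X. idm D (P0 FA X)) (rho C D FA FB G)"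
      by (rule inv_pn)
  next
    fix b a q p al
    assume "ab_square C A B b a q p al" "q \<in> A \<inter> B" "p \<in> A \<inter> B"
    then show "vcmp D (P2 FA al) (vcmp D (Pc FA a q) (hcmp D (idc D (P1 FA a)) (rho C D FA FB G q)))
          = vcmp D (Pc FA p b) (vcmp D (hcmp D (rho C D FA FB G p) (idc D (P1 FA b))) (G b a q p al))"
      using c_law by blast
  next
    fix b a q p al
    assume "ab_square C A B b a q p al" "a \<in> A \<inter> B" "b \<in> A \<inter> B"
    then show "vcmp D (P2 FB al) (vcmp D (Pc FB a q) (hcmp D (inv2 D (rho C D FA FB G a)) (idc D (P1 FB q))))
          = vcmp D (Pc FB p b) (vcmp D (hcmp D (idc D (P1 FB p)) (inv2 D (rho C D FA FB G b))) (G b a q p al))"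
      using c'_law by blast
  qed
qed

end
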